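(* Let $S_{\mathbb 1}\in\mathcal B(\ell^2(V))$ be the adjacency operator of a directed tree $\mathcal T=(V,E)$. Then: (i) $S_{\mathbb 1}$ is a $2$-isometry satisfying the kernel condition iff $\mathcal T$ is graph isomorphic to $\mathbb Z_+$ or to $\mathbb Z$; (ii) if $\mathcal T$ is rooted, $S_{\mathbb 1}$ is a Brownian isometry iff $\mathcal T$ is graph isomorphic to $\mathbb Z_+$; (iii) if $\mathcal T$ is rooted, $S_{\mathbb 1}$ is a quasi-Brownian isometry iff $\mathcal T$ is graph isomorphic to $\mathbb Z_+$ or $\mathcal T$ is a quasi-Brownian directed tree; (iv) if $\mathcal T$ is rootless, $S_{\mathbb 1}$ is a quasi-Brownian isometry iff it is a Brownian isometry, iff $\mathcal T$ is graph isomorphic to $\mathbb Z$ or is a quasi-Brownian directed tree.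
   Context: A directed tree is a connected directed graph without circuits with each vertex having at most one parent; $\mathrm{par}$, $\mathrm{Chi}(u)$ (children) and $\deg u=\#\mathrm{Chi}(u)$ as usual. The adjacency operator is the weighted shift with all weights $1$: $(S_{\mathbb 1}f)(v)=f(\mathrm{par}(v))$ for non-root $v$ and $0$ at the root. $\mathbb Z_+$ and $\mathbb Z$ denote the directed trees with edges $(n,n+1)$. $2$-isometry: $I-2T^*T+T^{*2}T^2=0$. Kernel condition: $T^*T(\ker T^* )\subseteq\ker T^*$. With $\Delta_T=T^*T-I$: a quasi-Brownian isometry is a $2$-isometry with $\Delta_TT=\Delta_T^{1/2}T\Delta_T^{1/2}$; a Brownian isometry is a $2$-isometry with $\Delta_T\Delta_{T^*}\Delta_T=0$. For $l\in\{2,3,\ldots\}$, a quasi-Brownian directed tree of valency $l$ is a directed tree in which some vertex has degree $l$, every vertex has degree $1$ or $l$, every child of a degree-$1$ vertex has degree $1$, and each vertex of degree $l$ has exactly one child of degree $l$ while its other $l-1$ children have degree $1$. *)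

theory Defs
  imports "HOL-Analysis.Analysis"
begin

definition directed_tree :: "'a set \<Rightarrow> ('a \<times> 'a) set \<Rightarrow> bool" where
  "directed_tree V E \<longleftrightarrow>
     V \<noteq> {} \<and> E \<subseteq> V \<times> V \<and>
     (\<forall>u\<in>V. \<forall>v\<in>V. (u, v) \<in> (E \<union> E\<inverse>)\<^sup>*) \<and>
     acyclic E \<and>
     (\<forall>u w v. (u, v) \<in> E \<longrightarrow> (w, v) \<in> E \<longrightarrow> u = w)"

definition is_root :: "'a set \<Rightarrow> ('a \<times> 'a) set \<Rightarrow> 'a \<Rightarrow> bool" where
  "is_root V E r \<longleftrightarrow> r \<in> V \<and> (\<nexists>u. (u, r) \<in> E)"

definition rooted :: "'a set \<Rightarrow> ('a \<times> 'a) set \<Rightarrow> bool" where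
  "rooted V E \<longleftrightarrow> (\<exists>r. is_root V E r)"

definition par :: "('a \<times> 'a) set \<Rightarrow> 'a \<Rightarrow> 'a" where
  "par E v = (THE u. (u, v) \<in> E)"

definition Chi :: "('a \<times> 'a) set \<Rightarrow> 'a \<Rightarrow> 'a set" where
  "Chi E u = {v. (u, v) \<in> E}"

definition deg :: "('a \<times> 'a) set \<Rightarrow> 'a \<Rightarrow> nat" where
  "deg E u = card (Chi E u)"

definition iso_Zplus :: "'a set \<Rightarrow> ('a \<times> 'a) set \<Rightarrow> bool" where
  "iso_Zplus V E \<longleftrightarrow> (\<exists>\<phi>. bij_betw \<phi> V (UNIV :: nat set) \<and>
      (\<forall>u\<in>V. \<forall>v\<in>V. (u, v) \<in> E \<longleftrightarrow> \<phi> v = \<phi> u + 1))"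

definition iso_Z :: "'a set \<Rightarrow> ('a \<times> 'a) set \<Rightarrow> bool" where
  "iso_Z V E \<longleftrightarrow> (\<exists>\<phi>. bij_betw \<phi> V (UNIV :: int set) \<and>
      (\<forall>u\<in>V. \<forall>v\<in>V. (u, v) \<in> E \<longleftrightarrow> \<phi> v = \<phi> u + 1))"

definition quasi_brownian_tree_val :: "'a set \<Rightarrow> ('a \<times> 'a) set \<Rightarrow> nat \<Rightarrow> bool" where
  "quasi_brownian_tree_val V E l \<longleftrightarrow>
     (\<exists>v\<in>V. deg E v = l) \<and>
     (\<forall>v\<in>V. deg E v = 1 \<or> deg E v = l) \<and>
     (\<forall>v\<in>V. deg E v = 1 \<longrightarrow> (\<forall>w\<in>Chi E v. deg E w = 1)) \<and>
     (\<forall>v\<in>V. deg E v = l \<longrightarrow>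
        card {w \<in> Chi E v. deg E w = l} = 1 \<and> card {w \<in> Chi E v. deg E w = 1} = l - 1)"

definition quasi_brownian_tree :: "'a set \<Rightarrow> ('a \<times> 'a) set \<Rightarrow> bool" where
  "quasi_brownian_tree V E \<longleftrightarrow> (\<exists>l\<ge>2. quasi_brownian_tree_val V E l)"

text \<open>Elements of ell^2(V) are represented as functions vanishing outside V;
operators are maps on such functions, considered only on ell^2(V).\<close>

definition ell2 :: "'a set \<Rightarrow> ('a \<Rightarrow> complex) set" where
  "ell2 V = {f. (\<forall>x. x \<notin> V \<longrightarrow> f x = 0) \<and> (\<lambda>x. (cmod (f x))\<^sup>2) summable_on V}"

definition ell2_inner :: "'a set \<Rightarrow> ('a \<Rightarrow> complex) \<Rightarrow> ('a \<Rightarrow> complex) \<Rightarrow> complex" where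
  "ell2_inner V f g = (\<Sum>\<^sub>\<infinity>x\<in>V. cnj (f x) * g x)"

definition ell2_norm :: "'a set \<Rightarrow> ('a \<Rightarrow> complex) \<Rightarrow> real" where
  "ell2_norm V f = sqrt (\<Sum>\<^sub>\<infinity>x\<in>V. (cmod (f x))\<^sup>2)"

type_synonym 'a op = "('a \<Rightarrow> complex) \<Rightarrow> ('a \<Rightarrow> complex)"

definition bounded_op :: "'a set \<Rightarrow> 'a op \<Rightarrow> bool" where
  "bounded_op V T \<longleftrightarrow>
     (\<forall>f\<in>ell2 V. T f \<in> ell2 V) \<and>
     (\<forall>f\<in>ell2 V. \<forall>g\<in>ell2 V. \<forall>a b. T (\<lambda>x. a * f x + b * g x) = (\<lambda>x. a * T f x + b * T g x)) \<and>
     (\<exists>C. \<forall>f\<in>ell2 V. ell2_norm V (T f) \<le> C * ell2_norm V f)"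

text \<open>The Hilbert space adjoint (made unique by setting it 0 outside ell^2(V)).\<close>

definition adjoint :: "'a set \<Rightarrow> 'a op \<Rightarrow> 'a op" where
  "adjoint V T = (THE A. (\<forall>g\<in>ell2 V. A g \<in> ell2 V) \<and>
      (\<forall>f\<in>ell2 V. \<forall>g\<in>ell2 V. ell2_inner V (T f) g = ell2_inner V f (A g)) \<and>
      (\<forall>g. g \<notin> ell2 V \<longrightarrow> A g = (\<lambda>_. 0)))"

definition positive_op :: "'a set \<Rightarrow> 'a op \<Rightarrow> bool" where
  "positive_op V R \<longleftrightarrow> (\<forall>f\<in>ell2 V. Im (ell2_inner V (R f) f) = 0 \<and> Re (ell2_inner V (R f) f) \<ge> 0)"

definition sqrt_op :: "'a set \<Rightarrow> 'a op \<Rightarrow> 'a op" where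
  "sqrt_op V A = (THE R. bounded_op V R \<and> positive_op V R \<and>
      (\<forall>f\<in>ell2 V. R (R f) = A f) \<and> (\<forall>f. f \<notin> ell2 V \<longrightarrow> R f = (\<lambda>_. 0)))"

definition Delta :: "'a set \<Rightarrow> 'a op \<Rightarrow> 'a op" where
  "Delta V T = (\<lambda>f x. adjoint V T (T f) x - f x)"

definition two_isometry :: "'a set \<Rightarrow> 'a op \<Rightarrow> bool" where
  "two_isometry V T \<longleftrightarrow> (\<forall>f\<in>ell2 V.
     (\<lambda>x. f x - 2 * adjoint V T (T f) x + adjoint V T (adjoint V T (T (T f))) x) = (\<lambda>_. 0))"

definition kernel_condition :: "'a set \<Rightarrow> 'a op \<Rightarrow> bool" where
  "kernel_condition V T \<longleftrightarrow> (\<forall>f\<in>ell2 V. adjoint V T f = (\<lambda>_. 0) \<longrightarrow>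
     adjoint V T (adjoint V T (T f)) = (\<lambda>_. 0))"

definition quasi_brownian_isometry :: "'a set \<Rightarrow> 'a op \<Rightarrow> bool" where
  "quasi_brownian_isometry V T \<longleftrightarrow> two_isometry V T \<and>
     (\<forall>f\<in>ell2 V. Delta V T (T f) = sqrt_op V (Delta V T) (T (sqrt_op V (Delta V T) f)))"

definition brownian_isometry :: "'a set \<Rightarrow> 'a op \<Rightarrow> bool" where
  "brownian_isometry V T \<longleftrightarrow> two_isometry V T \<and>
     (\<forall>f\<in>ell2 V. Delta V T (Delta V (adjoint V T) (Delta V T f)) = (\<lambda>_. 0))"

definition adjacency_op :: "'a set \<Rightarrow> ('a \<times> 'a) set \<Rightarrow> 'a op" where
  "adjacency_op V E f = (\<lambda>v. if v \<in> V \<and> (\<exists>u. (u, v) \<in> E) then f (par E v) else 0)"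

end

theory Submission
  imports Defs
begin


locale dtree =
  fixes V :: "'a set" and E :: "('a \<times> 'a) set"
  assumes tree: "directed_tree V E"
begin

lemma E_sub: "E \<subseteq> V \<times> V" using tree unfolding directed_tree_def by auto
lemma edgeD: "(u,v) \<in> E \<Longrightarrow> u \<in> V \<and> v \<in> V" using E_sub by blast
lemma uniq: "(u,v) \<in> E \<Longrightarrow> (w,v) \<in> E \<Longrightarrow> u = w" using tree unfolding directed_tree_def by auto
lemma acyc: "acyclic E" using tree unfolding directed_tree_def by auto
lemma conn: "u \<in> V \<Longrightarrow> v \<in> V \<Longrightarrow> (u, v) \<in> (E \<union> E\<inverse>)\<^sup>*" using tree unfolding directed_tree_def by auto
lemma par_eq: "(u,v) \<in> E \<Longrightarrow> par E v = u"
  unfolding par_def using uniq by blast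
lemma Chi_sub: "Chi E u \<subseteq> V" unfolding Chi_def using E_sub by blast
lemma Chi_iff: "v \<in> Chi E u \<longleftrightarrow> (u,v) \<in> E" unfolding Chi_def by simp

lemma closed_all:
  assumes "x0 \<in> X" "x0 \<in> V"
    and "\<And>x y. x \<in> X \<Longrightarrow> (x,y) \<in> E \<Longrightarrow> y \<in> X"
    and "\<And>x y. x \<in> X \<Longrightarrow> (y,x) \<in> E \<Longrightarrow> y \<in> X"
    and "v \<in> V"
  shows "v \<in> X"
proof -
  have "(x0, v) \<in> (E \<union> E\<inverse>)\<^sup>*" using conn assms by blast
  then show ?thesis
    by (induction rule: rtrancl_induct) (use assms in blast)+
qed

lemma common_anc:
  assumes "u \<in> V" "w \<in> V"
  shows "\<exists>c. (c,u) \<in> E\<^sup>* \<and> (c,w) \<in> E\<^sup>*"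
proof -
  have "(u, w) \<in> (E \<union> E\<inverse>)\<^sup>*" using conn assms by blast
  then show ?thesis
  proof (induction rule: rtrancl_induct)
    case base then show ?case by blast
  next
    case (step w w')
    then obtain c where c: "(c,u) \<in> E\<^sup>*" "(c,w) \<in> E\<^sup>*" by blast
    show ?case
    proof (cases "(w,w') \<in> E")
      case True then show ?thesis using c by (meson rtrancl.rtrancl_into_rtrancl)
    next
      case False
      then have ww: "(w',w) \<in> E" using step by blast
      show ?thesis
      proof (cases "c = w")
        case True
        then have "(w',u) \<in> E\<^sup>*" using ww c by (meson converse_rtrancl_into_rtrancl)
        then show ?thesis by blast
      next
        case False
        then have "(c,w) \<in> E\<^sup>+" using c by (meson rtrancl_eq_or_trancl)
        then obtain y where "(c,y) \<in> E\<^sup>*" "(y,w) \<in> E" by (meson tranclD2)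
        then have "(c,w') \<in> E\<^sup>*" using ww uniq by blast
        then show ?thesis using c by blast
      qed
    qed
  qed
qed

lemma root_anc:
  assumes "is_root V E r" "v \<in> V"
  shows "(r, v) \<in> E\<^sup>*"
proof -
  obtain c where c: "(c,r) \<in> E\<^sup>*" "(c,v) \<in> E\<^sup>*" using common_anc assms unfolding is_root_def by blast
  have "c = r"
  proof (rule ccontr)
    assume "c \<noteq> r"
    then have "(c,r) \<in> E\<^sup>+" using c by (meson rtrancl_eq_or_trancl)
    then obtain y where "(y,r) \<in> E" by (meson tranclD2)
    then show False using assms unfolding is_root_def by blast
  qed
  then show ?thesis using c by simp
qed


definition ch :: "'a \<Rightarrow> 'a" where "ch x = (THE y. (x,y) \<in> E)"

lemma ch:
  assumes "deg E x = 1"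
  shows "(x, ch x) \<in> E" "(x,y) \<in> E \<Longrightarrow> y = ch x"
proof -
  obtain c where c: "Chi E x = {c}" using assms unfolding deg_def by (meson card_1_singletonE)
  then have e: "(x,y) \<in> E \<longleftrightarrow> y = c" for y unfolding Chi_def by blast
  then have "ch x = c" unfolding ch_def by auto
  then show "(x, ch x) \<in> E" "(x,y) \<in> E \<Longrightarrow> y = ch x" using e by auto
qed

lemma surj_obtain:
  assumes "bij_betw \<phi> A B" "x \<in> B"
  obtains v where "v \<in> A" "\<phi> v = x"
proof -
  have "x \<in> \<phi> ` A" using bij_betw_imp_surj_on[OF assms(1)] assms(2) by simp
  then show ?thesis using that by blast
qed

lemma iso_from_enum:
  fixes \<psi> :: "'b::{plus,one} \<Rightarrow> 'a"
  assumes "bij_betw \<psi> UNIV V" "\<And>m n. (\<psi> m, \<psi> n) \<in> E \<longleftrightarrow> n = m + 1"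
  shows "\<exists>\<phi>. bij_betw \<phi> V (UNIV::'b set) \<and> (\<forall>u\<in>V. \<forall>v\<in>V. (u, v) \<in> E \<longleftrightarrow> \<phi> v = \<phi> u + 1)"
proof (intro exI conjI ballI)
  let ?\<phi> = "the_inv_into UNIV \<psi>"
  show "bij_betw ?\<phi> V UNIV" using assms(1) by (rule bij_betw_the_inv_into)
  fix u v assume "u \<in> V" "v \<in> V"
  then obtain m n where mn: "u = \<psi> m" "v = \<psi> n" using surj_obtain[OF assms(1)] by metis
  have inj: "inj \<psi>" using assms(1) unfolding bij_betw_def by blast
  have "?\<phi> u = m" "?\<phi> v = n" using mn the_inv_into_f_f[OF inj] by auto
  then show "(u, v) \<in> E \<longleftrightarrow> ?\<phi> v = ?\<phi> u + 1" using assms(2) mn by simp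
qed

lemma All1_deg_from_iso:
  fixes \<phi> :: "'a \<Rightarrow> 'b::{plus,one}"
  assumes "bij_betw \<phi> V (UNIV::'b set)" "\<forall>u\<in>V. \<forall>v\<in>V. (u, v) \<in> E \<longleftrightarrow> \<phi> v = \<phi> u + 1"
    and "u \<in> V"
  shows "deg E u = 1"
proof -
  obtain v where v: "v \<in> V" "\<phi> v = \<phi> u + 1" using surj_obtain[OF assms(1)] by blast
  have "Chi E u = {v}"
  proof
    show "{v} \<subseteq> Chi E u" using v assms unfolding Chi_def by auto
    show "Chi E u \<subseteq> {v}"
    proof
      fix w assume "w \<in> Chi E u"
      then have w: "w \<in> V" "(u,w) \<in> E" using Chi_sub Chi_iff by blast+
      then have "\<phi> w = \<phi> v" using assms v by auto
      then show "w \<in> {v}" using w v assms(1) unfolding bij_betw_def inj_on_def by auto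
    qed
  qed
  then show ?thesis unfolding deg_def by simp
qed

definition All1 where "All1 \<longleftrightarrow> (\<forall>u\<in>V. deg E u = 1)"

lemma Zplus_imp: assumes "iso_Zplus V E" shows "rooted V E \<and> All1"
proof -
  obtain \<phi> where p: "bij_betw \<phi> V (UNIV::nat set)" "\<forall>u\<in>V. \<forall>v\<in>V. (u, v) \<in> E \<longleftrightarrow> \<phi> v = \<phi> u + 1"
    using assms unfolding iso_Zplus_def by blast
  obtain r where r: "r \<in> V" "\<phi> r = 0" using surj_obtain[OF p(1)] by blast
  have "(u, r) \<notin> E" for u
  proof
    assume "(u,r) \<in> E"
    then have "u \<in> V" "\<phi> r = \<phi> u + 1" using p(2) r(1) edgeD by blast+
    then show False using r by simp
  qed
  then have "is_root V E r" unfolding is_root_def using r by blast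
  then have "rooted V E" unfolding rooted_def by blast
  moreover have "All1" unfolding All1_def using All1_deg_from_iso[OF p] by blast
  ultimately show ?thesis by blast
qed

lemma Z_imp: assumes "iso_Z V E" shows "\<not> rooted V E \<and> All1"
proof -
  obtain \<phi> where p: "bij_betw \<phi> V (UNIV::int set)" "\<forall>u\<in>V. \<forall>v\<in>V. (u, v) \<in> E \<longleftrightarrow> \<phi> v = \<phi> u + 1"
    using assms unfolding iso_Z_def by blast
  have "\<not> is_root V E r" for r
  proof
    assume r: "is_root V E r"
    obtain u where u: "u \<in> V" "\<phi> u = \<phi> r - 1" using surj_obtain[OF p(1)] by blast
    then have "\<phi> r = \<phi> u + 1" by simp
    moreover have "r \<in> V" using r unfolding is_root_def by blast
    ultimately have "(u, r) \<in> E" using p(2) u(1) by blast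
    then show False using r unfolding is_root_def by blast
  qed
  then have "\<not> rooted V E" unfolding rooted_def by blast
  moreover have "All1" unfolding All1_def using All1_deg_from_iso[OF p] by blast
  ultimately show ?thesis by blast
qed

lemma imp_Zplus:
  assumes "rooted V E" "All1" shows "iso_Zplus V E"
proof -
  obtain r where r: "is_root V E r" using assms unfolding rooted_def by blast
  define \<psi> where "\<psi> n = (ch ^^ n) r" for n
  have d1: "x \<in> V \<Longrightarrow> deg E x = 1" for x using assms unfolding All1_def by blast
  have rV: "r \<in> V" using r unfolding is_root_def by blast
  have psiS: "\<psi> (Suc n) = ch (\<psi> n)" for n by (simp add: \<psi>_def)
  have chV: "x \<in> V \<Longrightarrow> ch x \<in> V" for x using ch(1)[OF d1] edgeD by blast
  have psiV: "\<psi> n \<in> V" for n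
  proof (induction n)
    case 0 then show ?case by (simp add: \<psi>_def rV)
  next
    case (Suc n) then show ?case using psiS chV by simp
  qed
  have edge: "(\<psi> n, \<psi> (Suc n)) \<in> E" for n using ch(1)[OF d1[OF psiV]] psiS by simp
  have path: "(\<psi> m, \<psi> (m + Suc k)) \<in> E\<^sup>+" for m k
  proof (induction k)
    case 0 then show ?case using edge by auto
  next
    case (Suc k)
    have "(\<psi> m, \<psi> (Suc (m + Suc k))) \<in> E\<^sup>+" using trancl_into_trancl[OF Suc.IH edge[of "m + Suc k"]] .
    then show ?case by simp
  qed
  have key: "\<psi> a \<noteq> \<psi> b" if lt: "a < b" for a b
  proof
    assume ab: "\<psi> a = \<psi> b"
    obtain k where "b = Suc (a + k)" using less_imp_Suc_add[OF lt] by blast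
    then have "b = a + Suc k" by simp
    then have "(\<psi> a, \<psi> b) \<in> E\<^sup>+" using path by simp
    then have "(\<psi> a, \<psi> a) \<in> E\<^sup>+" using ab by simp
    then show False using acyc unfolding acyclic_def by blast
  qed
  have inj: "inj \<psi>"
  proof (rule injI, rule ccontr)
    fix m n assume eq: "\<psi> m = \<psi> n" and ne: "m \<noteq> n"
    then consider "m < n" | "n < m" by linarith
    then show False using key eq by (cases, blast, metis)
  qed
  have surj: "v \<in> range \<psi>" if "v \<in> V" for v
  proof (rule closed_all[of r])
    have "\<psi> 0 = r" by (simp add: \<psi>_def)
    then show "r \<in> range \<psi>" by (metis rangeI)
    show "r \<in> V" by (rule rV)
    show "v \<in> V" by (rule that)
    fix x y assume x: "x \<in> range \<psi>"
    then obtain n where n: "x = \<psi> n" by blast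
    { assume "(x,y) \<in> E"
      then have "y = ch (\<psi> n)" using ch(2)[OF d1[OF psiV]] n by blast
      then have "y = \<psi> (Suc n)" using psiS by simp
      then show "y \<in> range \<psi>" by blast }
    { assume yx: "(y,x) \<in> E"
      show "y \<in> range \<psi>"
      proof (cases n)
        case 0 then show ?thesis using yx n r unfolding is_root_def \<psi>_def by auto
      next
        case (Suc m)
        then have "(\<psi> m, x) \<in> E" using edge n by simp
        then have "y = \<psi> m" using yx uniq by blast
        then show ?thesis by blast
      qed }
  qed
  have bij: "bij_betw \<psi> UNIV V" unfolding bij_betw_def using inj psiV surj by auto
  have "(\<psi> m, \<psi> n) \<in> E \<longleftrightarrow> n = m + 1" for m n
  proof
    assume "(\<psi> m, \<psi> n) \<in> E"
    then have "\<psi> n = ch (\<psi> m)" using ch(2)[OF d1[OF psiV]] by blast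
    then have "\<psi> n = \<psi> (Suc m)" using psiS by simp
    then show "n = m + 1" using inj by (simp add: inj_eq)
  qed (use edge in simp)
  then show ?thesis unfolding iso_Zplus_def using iso_from_enum[OF bij] by blast
qed

lemma imp_Z:
  assumes "\<not> rooted V E" "All1" shows "iso_Z V E"
proof -
  have d1: "x \<in> V \<Longrightarrow> deg E x = 1" for x using assms unfolding All1_def by blast
  have hp: "x \<in> V \<Longrightarrow> (par E x, x) \<in> E" for x
    using assms(1) par_eq unfolding rooted_def is_root_def by metis
  have chpar: "x \<in> V \<Longrightarrow> ch (par E x) = x" for x
    using ch(2)[OF d1] hp edgeD by metis
  obtain v0 where v0: "v0 \<in> V" using tree unfolding directed_tree_def by auto
  define \<psi> where "\<psi> n = (if n \<ge> 0 then (ch ^^ nat n) v0 else (par E ^^ nat (-n)) v0)" for n :: int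
  have chV: "x \<in> V \<Longrightarrow> ch x \<in> V" for x using ch(1)[OF d1] edgeD by blast
  have parV: "x \<in> V \<Longrightarrow> par E x \<in> V" for x using hp edgeD by blast
  have chn: "(ch ^^ n) v0 \<in> V" for n by (induction n) (auto simp: v0 chV)
  have parn: "(par E ^^ n) v0 \<in> V" for n by (induction n) (auto simp: v0 parV)
  have psiV: "\<psi> n \<in> V" for n unfolding \<psi>_def using chn parn by simp
  have psiS: "\<psi> (n + 1) = ch (\<psi> n)" for n
  proof (cases "n \<ge> 0")
    case True
    then have "nat (n+1) = Suc (nat n)" by simp
    then show ?thesis unfolding \<psi>_def using True by simp
  next
    case False
    then have a: "nat (-n) = Suc (nat (-(n+1)))" by simp
    have b: "\<psi> (n+1) = (par E ^^ nat (-(n+1))) v0"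
      unfolding \<psi>_def using False by (cases "n + 1 = 0") auto
    have "\<psi> n = par E ((par E ^^ nat (-(n+1))) v0)" unfolding \<psi>_def using False a by simp
    then show ?thesis using b chpar parn by simp
  qed
  have edge: "(\<psi> n, \<psi> (n+1)) \<in> E" for n using ch(1)[OF d1[OF psiV]] psiS by simp
  have path: "(\<psi> m, \<psi> (m + int (Suc k))) \<in> E\<^sup>+" for m k
  proof (induction k)
    case 0 then show ?case using edge by auto
  next
    case (Suc k)
    have e: "m + int (Suc (Suc k)) = (m + int (Suc k)) + 1" by simp
    have "(\<psi> m, \<psi> ((m + int (Suc k)) + 1)) \<in> E\<^sup>+" using trancl_into_trancl[OF Suc.IH edge[of "m + int (Suc k)"]] .
    then show ?case by (simp only: e)
  qed
  have key: "\<psi> a \<noteq> \<psi> b" if ab: "a < b" for a b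
  proof
    assume eq: "\<psi> a = \<psi> b"
    define k where "k = nat (b - a - 1)"
    have "b = a + int (Suc k)" unfolding k_def using ab by simp
    then have "(\<psi> a, \<psi> b) \<in> E\<^sup>+" using path by simp
    then have "(\<psi> a, \<psi> a) \<in> E\<^sup>+" using eq by simp
    then show False using acyc unfolding acyclic_def by blast
  qed
  have inj: "inj \<psi>"
  proof (rule injI, rule ccontr)
    fix m n assume eq: "\<psi> m = \<psi> n" and ne: "m \<noteq> n"
    then consider "m < n" | "n < m" by linarith
    then show False using key eq by (cases, blast, metis)
  qed
  have surj: "v \<in> range \<psi>" if "v \<in> V" for v
  proof (rule closed_all[of v0])
    have "\<psi> 0 = v0" by (simp add: \<psi>_def)
    then show "v0 \<in> range \<psi>" by (metis rangeI)
    show "v0 \<in> V" by (rule v0)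
    show "v \<in> V" by (rule that)
    fix x y assume x: "x \<in> range \<psi>"
    then obtain n where n: "x = \<psi> n" by blast
    { assume "(x,y) \<in> E"
      then have "y = ch (\<psi> n)" using ch(2)[OF d1[OF psiV]] n by blast
      then have "y = \<psi> (n+1)" using psiS by simp
      then show "y \<in> range \<psi>" by blast }
    { assume yx: "(y,x) \<in> E"
      have "(\<psi> (n-1), x) \<in> E" using edge[of "n-1"] n by simp
      then have "y = \<psi> (n-1)" using yx uniq by blast
      then show "y \<in> range \<psi>" by blast }
  qed
  have bij: "bij_betw \<psi> UNIV V" unfolding bij_betw_def using inj psiV surj by auto
  have "(\<psi> m, \<psi> n) \<in> E \<longleftrightarrow> n = m + 1" for m n
  proof
    assume "(\<psi> m, \<psi> n) \<in> E"
    then have "\<psi> n = ch (\<psi> m)" using ch(2)[OF d1[OF psiV]] by blast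
    then have "\<psi> n = \<psi> (m+1)" using psiS by simp
    then show "n = m + 1" using inj by (simp add: inj_eq)
  qed (use edge in simp)
  then show ?thesis unfolding iso_Z_def using iso_from_enum[OF bij] by blast
qed


end

locale ftree = dtree +
  assumes finChi: "finite (Chi E u)"
begin

definition sdeg where "sdeg u = (\<Sum>v\<in>Chi E u. deg E v)"
definition TI where "TI \<longleftrightarrow> (\<forall>u\<in>V. 1 + sdeg u = 2 * deg E u)"
definition QL where "QL \<longleftrightarrow> (\<forall>u v. (u,v) \<in> E \<longrightarrow> deg E v = 1 \<or> deg E v = deg E u)"
definition Sib where "Sib \<longleftrightarrow> (\<forall>p v w. (p,v) \<in> E \<longrightarrow> (p,w) \<in> E \<longrightarrow> v \<noteq> w \<longrightarrow> deg E v \<noteq> 1 \<longrightarrow> deg E w = 1)"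
definition R1 where "R1 \<longleftrightarrow> (\<forall>v\<in>V. (\<forall>u. (u,v) \<notin> E) \<longrightarrow> deg E v = 1)"

lemma deg_pos: "(u,v) \<in> E \<Longrightarrow> deg E u \<ge> 1"
  unfolding deg_def using finChi[of u] Chi_iff[of v u]
  by (metis One_nat_def Suc_leI card_gt_0_iff empty_iff)

lemma sdeg_remove: "(u,v) \<in> E \<Longrightarrow> sdeg u = deg E v + (\<Sum>w\<in>Chi E u - {v}. deg E w)"
  unfolding sdeg_def using sum.remove[OF finChi, of v u] Chi_iff by blast

lemma TI_Sib_QL: assumes "TI" shows "Sib \<longleftrightarrow> QL"
proof
  assume S: Sib
  show QL unfolding QL_def
  proof (intro allI impI)
    fix u v assume uv: "(u,v) \<in> E"
    show "deg E v = 1 \<or> deg E v = deg E u"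
    proof (cases "deg E v = 1")
      case False
      have o: "w \<in> Chi E u - {v} \<Longrightarrow> deg E w = 1" for w
        using S False uv Chi_iff unfolding Sib_def by blast
      have "(\<Sum>w\<in>Chi E u - {v}. deg E w) = (\<Sum>w\<in>Chi E u - {v}. 1)"
        using o by (intro sum.cong) auto
      also have "\<dots> = deg E u - 1" unfolding deg_def using uv Chi_iff by simp
      finally have "sdeg u = deg E v + (deg E u - 1)" using sdeg_remove[OF uv] by simp
      moreover have "1 + sdeg u = 2 * deg E u" using assms edgeD[OF uv] unfolding TI_def by blast
      moreover have "deg E u \<ge> 1" using deg_pos[OF uv] .
      ultimately show ?thesis by linarith
    qed simp
  qed
next
  assume Q: QL
  show Sib unfolding Sib_def
  proof (intro allI impI, rule ccontr)
    fix p v w assume pv: "(p,v) \<in> E" and pw: "(p,w) \<in> E" and ne: "v \<noteq> w"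
      and dv: "deg E v \<noteq> 1" and dw: "deg E w \<noteq> 1"
    let ?L = "deg E p"
    have v: "deg E v = ?L" and w: "deg E w = ?L" using Q pv pw dv dw unfolding QL_def by blast+
    have ge1: "x \<in> Chi E p \<Longrightarrow> deg E x \<ge> 1" for x
      using Q Chi_iff deg_pos[of p] unfolding QL_def by (metis le_refl)
    have "(\<Sum>x\<in>Chi E p - {v} - {w}. 1) \<le> (\<Sum>x\<in>Chi E p - {v} - {w}. deg E x)"
      using ge1 by (intro sum_mono) auto
    then have c: "card (Chi E p - {v} - {w}) \<le> (\<Sum>x\<in>Chi E p - {v} - {w}. deg E x)" by simp
    have wi: "w \<in> Chi E p - {v}" using pw ne Chi_iff by blast
    have s2: "(\<Sum>x\<in>Chi E p - {v}. deg E x) = deg E w + (\<Sum>x\<in>Chi E p - {v} - {w}. deg E x)"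
      using sum.remove[of "Chi E p - {v}" w] finChi wi by blast
    have "card (Chi E p - {v} - {w}) = ?L - 2"
      using wi Chi_iff pv unfolding deg_def by (simp add: card_Diff_singleton)
    have "?L \<ge> 2"
    proof -
      have "{v,w} \<subseteq> Chi E p" using pv pw Chi_iff by blast
      then have "card {v,w} \<le> ?L" unfolding deg_def using finChi card_mono by blast
      then show ?thesis using ne by simp
    qed
    have "1 + sdeg p = 2 * ?L" using assms edgeD[OF pv] unfolding TI_def by blast
    moreover have "sdeg p \<ge> ?L + ?L + (?L - 2)"
      using sdeg_remove[OF pv] s2 c v w \<open>card (Chi E p - {v} - {w}) = ?L - 2\<close> by linarith
    ultimately show False using \<open>?L \<ge> 2\<close> by linarith
  qed
qed

lemma All1_all: "All1 \<Longrightarrow> TI \<and> QL \<and> R1"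
proof -
  assume A: All1
  have d: "x \<in> V \<Longrightarrow> deg E x = 1" for x using A unfolding All1_def by blast
  have "sdeg u = deg E u" if "u \<in> V" for u
  proof -
    have "sdeg u = (\<Sum>v\<in>Chi E u. 1)" unfolding sdeg_def using d Chi_sub by (intro sum.cong) auto
    then show ?thesis unfolding deg_def by simp
  qed
  then have "TI" unfolding TI_def using d by simp
  moreover have QL unfolding QL_def using d edgeD by blast
  moreover have R1 unfolding R1_def using d by blast
  ultimately show ?thesis by blast
qed

lemma desc:
  assumes QL "(c,w) \<in> E\<^sup>*" "deg E c = L"
  shows "deg E w = 1 \<or> deg E w = L"
  using assms(2)
proof (induction rule: rtrancl_induct)
  case base then show ?case using assms by simp
next
  case (step y z)
  then show ?case using assms(1) unfolding QL_def by metis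
qed

lemma anc:
  assumes QL "(a,x) \<in> E\<^sup>*" "deg E x \<ge> 2"
  shows "deg E a = deg E x"
  using assms(2)
proof (induction rule: converse_rtrancl_induct)
  case base then show ?case by simp
next
  case (step y z)
  then have "deg E z = 1 \<or> deg E z = deg E y" using assms(1) unfolding QL_def by blast
  then show ?case using step assms(3) by auto
qed

lemma rooted_L2:
  assumes "rooted V E"
  shows "TI \<and> QL \<and> R1 \<longleftrightarrow> All1"
proof
  assume h: "TI \<and> QL \<and> R1"
  obtain r where r: "is_root V E r" using assms unfolding rooted_def by blast
  have "deg E r = 1" using h r unfolding R1_def is_root_def by blast
  then show All1 unfolding All1_def using desc[of r] root_anc[OF r] h by fastforce
qed (use All1_all in blast)

lemma count:
  assumes TI "v \<in> V" "deg E v = L" "L \<ge> 2" and cs: "\<And>w. w \<in> Chi E v \<Longrightarrow> deg E w = 1 \<or> deg E w = L"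
  shows "card {w \<in> Chi E v. deg E w = L} = 1 \<and> card {w \<in> Chi E v. deg E w = 1} = L - 1"
proof -
  let ?A = "{w \<in> Chi E v. deg E w = L}" and ?B = "{w \<in> Chi E v. deg E w = 1}"
  have un: "Chi E v = ?A \<union> ?B" using cs by blast
  have dj: "?A \<inter> ?B = {}" using assms(4) by auto
  have fA: "finite ?A" and fB: "finite ?B" using finChi by auto
  have cc: "card ?A + card ?B = L" using card_Un_disjoint[OF fA fB dj] un assms(3) unfolding deg_def by simp
  have "sdeg v = sum (deg E) (?A \<union> ?B)" unfolding sdeg_def by (rule arg_cong[OF un])
  also have "\<dots> = sum (deg E) ?A + sum (deg E) ?B" by (rule sum.union_disjoint[OF fA fB dj])
  also have "sum (deg E) ?A = L * card ?A" by simp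
  also have "sum (deg E) ?B = card ?B" by simp
  finally have sd: "sdeg v = L * card ?A + card ?B" .
  have ti: "1 + sdeg v = 2 * L" using assms(1,2,3) unfolding TI_def by blast
  have "card ?A = 1"
  proof -
    have e: "L * card ?A = (L - 1) * card ?A + card ?A" using assms(4)
      by (cases L) (auto simp: algebra_simps)
    have "(L - 1) * card ?A = L - 1" using ti sd cc e by linarith
    then show ?thesis using assms(4) by simp
  qed
  then show ?thesis using cc by simp
qed

lemma L3: "TI \<and> QL \<longleftrightarrow> All1 \<or> quasi_brownian_tree V E"
proof
  assume h: "TI \<and> QL"
  show "All1 \<or> quasi_brownian_tree V E"
  proof (cases All1)
    case False
    then obtain u where u: "u \<in> V" "deg E u \<noteq> 1" unfolding All1_def by blast
    have "1 + sdeg u = 2 * deg E u" using h u unfolding TI_def by blast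
    then have L2: "deg E u \<ge> 2" using u by linarith
    let ?L = "deg E u"
    have all: "deg E w = 1 \<or> deg E w = ?L" if w: "w \<in> V" for w
    proof -
      obtain c where c: "(c,u) \<in> E\<^sup>*" "(c,w) \<in> E\<^sup>*" using common_anc[OF u(1) w] by blast
      have "deg E c = ?L" using anc[OF _ c(1) L2] h by blast
      then show ?thesis using desc[OF _ c(2)] h by blast
    qed
    have "quasi_brownian_tree_val V E ?L"
      unfolding quasi_brownian_tree_val_def
    proof (intro conjI ballI impI)
      show "\<exists>v\<in>V. deg E v = ?L" using u by blast
      show "deg E v = 1 \<or> deg E v = ?L" if "v \<in> V" for v using all that .
      show "deg E w = 1" if "v \<in> V" "deg E v = 1" "w \<in> Chi E v" for v w
        using h that Chi_iff unfolding QL_def by force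
      show "card {w \<in> Chi E v. deg E w = ?L} = 1" if "v \<in> V" "deg E v = ?L" for v
        using count[OF _ that L2] h all Chi_sub by blast
      show "card {w \<in> Chi E v. deg E w = 1} = ?L - 1" if "v \<in> V" "deg E v = ?L" for v
        using count[OF _ that L2] h all Chi_sub by blast
    qed
    then show ?thesis unfolding quasi_brownian_tree_def using L2 by blast
  qed simp
next
  assume "All1 \<or> quasi_brownian_tree V E"
  then show "TI \<and> QL"
  proof
    assume "All1" then show ?thesis using All1_all by blast
  next
    assume "quasi_brownian_tree V E"
    then obtain l where l: "l \<ge> 2" "quasi_brownian_tree_val V E l" unfolding quasi_brownian_tree_def by blast
    have d: "v \<in> V \<Longrightarrow> deg E v = 1 \<or> deg E v = l" for v using l(2) unfolding quasi_brownian_tree_val_def by blast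
    have d1: "v \<in> V \<Longrightarrow> deg E v = 1 \<Longrightarrow> w \<in> Chi E v \<Longrightarrow> deg E w = 1" for v w
      using l(2) unfolding quasi_brownian_tree_val_def by blast
    have dl: "v \<in> V \<Longrightarrow> deg E v = l \<Longrightarrow> card {w \<in> Chi E v. deg E w = l} = 1 \<and> card {w \<in> Chi E v. deg E w = 1} = l - 1" for v
      using l(2) unfolding quasi_brownian_tree_val_def by blast
    have QL unfolding QL_def
    proof (intro allI impI)
      fix u v assume uv: "(u,v) \<in> E"
      then have "u \<in> V" "v \<in> V" using edgeD by auto
      then show "deg E v = 1 \<or> deg E v = deg E u" using d d1 Chi_iff uv by metis
    qed
    moreover have TI unfolding TI_def
    proof
      fix u assume u: "u \<in> V"
      show "1 + sdeg u = 2 * deg E u"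
      proof (cases "deg E u = 1")
        case True
        have "sdeg u = (\<Sum>v\<in>Chi E u. 1)" unfolding sdeg_def using d1[OF u True] by (intro sum.cong) auto
        then show ?thesis using True unfolding deg_def by simp
      next
        case False
        then have dL: "deg E u = l" using d u by blast
        let ?A = "{w \<in> Chi E u. deg E w = l}" and ?B = "{w \<in> Chi E u. deg E w = 1}"
        have un: "Chi E u = ?A \<union> ?B" using d Chi_sub by blast
        have dj: "?A \<inter> ?B = {}" using l(1) by auto
        have fA: "finite ?A" and fB: "finite ?B" using finChi by auto
        have "sdeg u = sum (deg E) (?A \<union> ?B)" unfolding sdeg_def by (rule arg_cong[OF un])
  also have "\<dots> = sum (deg E) ?A + sum (deg E) ?B" by (rule sum.union_disjoint[OF fA fB dj])
        also have "sum (deg E) ?A = l * card ?A" by simp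
        also have "sum (deg E) ?B = card ?B" by simp
        finally show ?thesis using dl[OF u dL] dL l(1) by simp
      qed
    qed
    ultimately show ?thesis by blast
  qed
qed

end

section \<open>ell2 basics\<close>

lemma ell2_zero_out: "f \<in> ell2 V \<Longrightarrow> x \<notin> V \<Longrightarrow> f x = 0" by (simp add: ell2_def)
lemma ell2_summ: "f \<in> ell2 V \<Longrightarrow> (\<lambda>x. (cmod (f x))\<^sup>2) summable_on V" by (simp add: ell2_def)

lemma ell2_bound:
  assumes "f \<in> ell2 V" "g \<in> ell2 V" "\<And>x. x \<notin> V \<Longrightarrow> h x = 0"
    "\<And>x. x \<in> V \<Longrightarrow> (cmod (h x))\<^sup>2 \<le> c * ((cmod (f x))\<^sup>2 + (cmod (g x))\<^sup>2)"
  shows "h \<in> ell2 V"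
proof -
  have "(\<lambda>x. (cmod (f x))\<^sup>2 + (cmod (g x))\<^sup>2) summable_on V"
    using summable_on_add[OF ell2_summ[OF assms(1)] ell2_summ[OF assms(2)]] .
  then have "(\<lambda>x. c * ((cmod (f x))\<^sup>2 + (cmod (g x))\<^sup>2)) summable_on V"
    by (rule summable_on_cmult_right)
  then have "(\<lambda>x. (cmod (h x))\<^sup>2) summable_on V"
    by (rule summable_on_comparison_test) (use assms in auto)
  then show ?thesis using assms(3) unfolding ell2_def by blast
qed

lemma sq2: fixes x y :: real shows "(x + y)\<^sup>2 \<le> 2 * (x\<^sup>2 + y\<^sup>2)"
proof -
  have "0 \<le> (x - y)\<^sup>2" by simp
  then show ?thesis by (simp add: power2_diff power2_sum)
qed

lemma sq_bound_aux:
  fixes A F B G :: real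
  shows "(A * F + B * G)\<^sup>2 \<le> 2 * (A\<^sup>2 + B\<^sup>2) * (F\<^sup>2 + G\<^sup>2)"
proof -
  have h1: "(A * F + B * G)\<^sup>2 \<le> 2 * ((A*F)\<^sup>2 + (B*G)\<^sup>2)" by (rule sq2)
  have h2: "2 * (A\<^sup>2 + B\<^sup>2) * (F\<^sup>2 + G\<^sup>2) = 2 * ((A*F)\<^sup>2 + (B*G)\<^sup>2) + 2 * ((A*G)\<^sup>2 + (B*F)\<^sup>2)"
    by (simp add: power_mult_distrib algebra_simps)
  have h3: "2 * ((A*F)\<^sup>2 + (B*G)\<^sup>2) \<le> 2 * ((A*F)\<^sup>2 + (B*G)\<^sup>2) + 2 * ((A*G)\<^sup>2 + (B*F)\<^sup>2)" by simp
  show ?thesis unfolding h2 using order_trans[OF h1 h3] .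
qed

lemma ell2_lin:
  assumes "f \<in> ell2 V" "g \<in> ell2 V"
  shows "(\<lambda>x. a * f x + b * g x) \<in> ell2 V"
proof (rule ell2_bound[OF assms, where c = "2 * ((cmod a)\<^sup>2 + (cmod b)\<^sup>2)"])
  show "x \<notin> V \<Longrightarrow> a * f x + b * g x = 0" for x using ell2_zero_out[OF assms(1)] ell2_zero_out[OF assms(2)] by simp
  fix x
  have "cmod (a * f x + b * g x) \<le> cmod a * cmod (f x) + cmod b * cmod (g x)"
    by (metis norm_mult norm_triangle_ineq)
  then have "(cmod (a * f x + b * g x))\<^sup>2 \<le> (cmod a * cmod (f x) + cmod b * cmod (g x))\<^sup>2"
    by (simp add: power_mono)
  also have "\<dots> \<le> 2 * ((cmod a)\<^sup>2 + (cmod b)\<^sup>2) * ((cmod (f x))\<^sup>2 + (cmod (g x))\<^sup>2)"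
    by (rule sq_bound_aux)
  finally show "(cmod (a * f x + b * g x))\<^sup>2 \<le> 2 * ((cmod a)\<^sup>2 + (cmod b)\<^sup>2) * ((cmod (f x))\<^sup>2 + (cmod (g x))\<^sup>2)" .
qed

lemma ell2_0: "(\<lambda>_. 0) \<in> ell2 V" unfolding ell2_def by simp

lemma ell2_restrict:
  assumes "f \<in> ell2 V" shows "(\<lambda>x. if P x then f x else 0) \<in> ell2 V"
  by (rule ell2_bound[OF assms assms, where c = 1]) (use assms ell2_zero_out in auto)

lemma ell2_scale:
  assumes "f \<in> ell2 V" "\<And>x. x \<in> V \<Longrightarrow> cmod (c x) \<le> K"
  shows "(\<lambda>x. c x * f x) \<in> ell2 V"
proof (rule ell2_bound[OF assms(1) assms(1), where c = "K\<^sup>2"])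
  show "x \<notin> V \<Longrightarrow> c x * f x = 0" for x using assms ell2_zero_out by fastforce
  fix x assume x: "x \<in> V"
  have "(cmod (c x * f x))\<^sup>2 = (cmod (c x))\<^sup>2 * (cmod (f x))\<^sup>2" by (simp add: norm_mult power_mult_distrib)
  also have "\<dots> \<le> K\<^sup>2 * (cmod (f x))\<^sup>2"
    using assms(2)[OF x] by (intro mult_right_mono power_mono) auto
  also have "\<dots> \<le> K\<^sup>2 * ((cmod (f x))\<^sup>2 + (cmod (f x))\<^sup>2)"
    by (rule mult_left_mono) auto
  finally show "(cmod (c x * f x))\<^sup>2 \<le> K\<^sup>2 * ((cmod (f x))\<^sup>2 + (cmod (f x))\<^sup>2)" .
qed

lemma ell2_fin:
  assumes "finite F" "\<And>x. x \<notin> F \<Longrightarrow> h x = 0" "F \<subseteq> V"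
  shows "h \<in> ell2 V"
proof -
  have "{x \<in> V. (cmod (h x))\<^sup>2 \<noteq> 0} \<subseteq> F" using assms(2) by auto
  then have "finite {x \<in> V. (cmod (h x))\<^sup>2 \<noteq> 0}" using assms(1) finite_subset by blast
  then have "(\<lambda>x. (cmod (h x))\<^sup>2) summable_on V" by (rule finite_nonzero_values_imp_summable_on)
  then show ?thesis unfolding ell2_def using assms by blast
qed

lemma prod_summable:
  assumes "f \<in> ell2 V" "g \<in> ell2 V"
  shows "(\<lambda>x. cnj (f x) * g x) summable_on V"
proof -
  have "(\<lambda>x. norm (cnj (f x) * g x)) summable_on V"
  proof (rule Infinite_Sum.abs_summable_on_comparison_test')
    show "(\<lambda>x. (cmod (f x))\<^sup>2 + (cmod (g x))\<^sup>2) summable_on V"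
      using summable_on_add[OF ell2_summ[OF assms(1)] ell2_summ[OF assms(2)]] .
    fix x
    have "0 \<le> (cmod (f x) - cmod (g x))\<^sup>2" by simp
    then have "2 * (cmod (f x) * cmod (g x)) \<le> (cmod (f x))\<^sup>2 + (cmod (g x))\<^sup>2"
      by (simp add: power2_diff)
    moreover have "0 \<le> cmod (f x) * cmod (g x)" by simp
    moreover have "norm (cnj (f x) * g x) = cmod (f x) * cmod (g x)" by (simp add: norm_mult)
    ultimately show "norm (cnj (f x) * g x) \<le> (cmod (f x))\<^sup>2 + (cmod (g x))\<^sup>2" by linarith
  qed
  then show ?thesis using summable_on_iff_abs_summable_on_complex by blast
qed

lemma inner_cnj: "ell2_inner V f g = cnj (ell2_inner V g f)"
  unfolding ell2_inner_def by (simp flip: infsum_cnj add: mult.commute)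

lemma infsum_single:
  assumes "x \<in> A" "\<And>y. y \<in> A \<Longrightarrow> y \<noteq> x \<Longrightarrow> h y = 0"
  shows "infsum h A = h x"
proof -
  have "infsum h A = infsum h {x}" by (rule infsum_cong_neutral) (use assms in auto)
  then show ?thesis by simp
qed

definition ev :: "'a \<Rightarrow> 'a \<Rightarrow> complex" where "ev x = (\<lambda>y. if y = x then 1 else 0)"

lemma ev_ell2: "x \<in> V \<Longrightarrow> ev x \<in> ell2 V"
  by (rule ell2_fin[of "{x}"]) (auto simp: ev_def)

lemma inner_ev: "x \<in> V \<Longrightarrow> ell2_inner V (ev x) h = h x"
  unfolding ell2_inner_def by (subst infsum_single[of x]) (auto simp: ev_def)

lemma infsum_of_real':
  assumes "g summable_on A"
  shows "infsum (\<lambda>x. complex_of_real (g x)) A = of_real (infsum g A)"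
  by (rule infsumI) (rule has_sum_of_real, simp add: assms)

lemma inner_self:
  assumes "f \<in> ell2 V"
  shows "ell2_inner V f f = of_real (\<Sum>\<^sub>\<infinity>x\<in>V. (cmod (f x))\<^sup>2)"
proof -
  have "ell2_inner V f f = (\<Sum>\<^sub>\<infinity>x\<in>V. complex_of_real ((cmod (f x))\<^sup>2))"
    unfolding ell2_inner_def by (intro infsum_cong) (metis complex_norm_square mult.commute of_real_power)
  then show ?thesis using infsum_of_real'[OF ell2_summ[OF assms]] by simp
qed

lemma adjoint_eqI:
  assumes "\<And>g. g \<in> ell2 V \<Longrightarrow> A g \<in> ell2 V"
    and "\<And>f g. f \<in> ell2 V \<Longrightarrow> g \<in> ell2 V \<Longrightarrow> ell2_inner V (T f) g = ell2_inner V f (A g)"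
    and "\<And>g. g \<notin> ell2 V \<Longrightarrow> A g = (\<lambda>_. 0)"
  shows "adjoint V T = A"
  unfolding adjoint_def
proof (rule the_equality)
  show "(\<forall>g\<in>ell2 V. A g \<in> ell2 V) \<and> (\<forall>f\<in>ell2 V. \<forall>g\<in>ell2 V. ell2_inner V (T f) g = ell2_inner V f (A g)) \<and>
    (\<forall>g. g \<notin> ell2 V \<longrightarrow> A g = (\<lambda>_. 0))" using assms by blast
  fix B assume B: "(\<forall>g\<in>ell2 V. B g \<in> ell2 V) \<and> (\<forall>f\<in>ell2 V. \<forall>g\<in>ell2 V. ell2_inner V (T f) g = ell2_inner V f (B g)) \<and>
    (\<forall>g. g \<notin> ell2 V \<longrightarrow> B g = (\<lambda>_. 0))"
  then have B1: "\<And>g. g \<in> ell2 V \<Longrightarrow> B g \<in> ell2 V"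
    and B2: "\<And>f g. f \<in> ell2 V \<Longrightarrow> g \<in> ell2 V \<Longrightarrow> ell2_inner V (T f) g = ell2_inner V f (B g)"
    and B3: "\<And>g. g \<notin> ell2 V \<Longrightarrow> B g = (\<lambda>_. 0)" by blast+
  show "B = A"
  proof
    fix g show "B g = A g"
    proof (cases "g \<in> ell2 V")
      case g: True
      show ?thesis
      proof
        fix x show "B g x = A g x"
        proof (cases "x \<in> V")
          case True
          have "B g x = ell2_inner V (ev x) (B g)" using inner_ev[OF True] by simp
          also have "\<dots> = ell2_inner V (T (ev x)) g" using B2[OF ev_ell2[OF True] g] by simp
          also have "\<dots> = ell2_inner V (ev x) (A g)" using assms(2)[OF ev_ell2[OF True] g] by simp
          also have "\<dots> = A g x" using inner_ev[OF True] by simp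
          finally show ?thesis .
        next
          case False
          then show ?thesis using ell2_zero_out[OF B1[OF g]] ell2_zero_out[OF assms(1)[OF g]] by simp
        qed
      qed
    next
      case False then show ?thesis using B3 assms(3) by simp
    qed
  qed
qed


locale adj = dtree +
  assumes bdd: "bounded_op V (adjacency_op V E)"
begin

abbreviation S where "S \<equiv> adjacency_op V E"

lemma S_ell2: "f \<in> ell2 V \<Longrightarrow> S f \<in> ell2 V" using bdd unfolding bounded_op_def by blast

lemma S_child: "(u,v) \<in> E \<Longrightarrow> S f v = f u"
  unfolding adjacency_op_def using edgeD par_eq by auto

lemma S_nopar: "(\<forall>u. (u,v) \<notin> E) \<Longrightarrow> S f v = 0"
  unfolding adjacency_op_def by auto

lemma S_out: "v \<notin> V \<Longrightarrow> S f v = 0"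
  unfolding adjacency_op_def by auto

lemma S_ev: "S (ev u) = (\<lambda>v. if v \<in> Chi E u then 1 else 0)"
proof
  fix v show "S (ev u) v = (if v \<in> Chi E u then 1 else 0)"
  proof (cases "\<exists>w. (w,v) \<in> E")
    case True
    then obtain w where w: "(w,v) \<in> E" by blast
    then have "v \<in> Chi E u \<longleftrightarrow> w = u" using uniq Chi_iff by blast
    then show ?thesis using S_child[OF w] by (simp add: ev_def)
  next
    case False
    then show ?thesis using S_nopar Chi_iff by auto
  qed
qed

lemma finChi': "finite (Chi E u)"
proof (cases "u \<in> V")
  case True
  have "S (ev u) \<in> ell2 V" using S_ell2 ev_ell2[OF True] by blast
  then have "(\<lambda>x. (cmod (S (ev u) x))\<^sup>2) summable_on V" by (rule ell2_summ)
  then have "(\<lambda>x. (cmod (S (ev u) x))\<^sup>2) summable_on Chi E u" by (rule summable_on_subset) (rule Chi_sub)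
  moreover have "(\<lambda>x. (cmod (S (ev u) x))\<^sup>2) summable_on Chi E u \<longleftrightarrow> (\<lambda>_. 1::real) summable_on Chi E u"
    by (rule summable_on_cong) (simp add: S_ev)
  ultimately have "(\<lambda>_. 1::real) summable_on Chi E u" by blast
  then show ?thesis using infsum_diverge_constant[of "Chi E u" "1::real"] by auto
next
  case False
  then have "Chi E u = {}" using Chi_iff edgeD by blast
  then show ?thesis by simp
qed

lemma norm_ev: "u \<in> V \<Longrightarrow> ell2_norm V (ev u) = 1"
  unfolding ell2_norm_def by (subst infsum_single[of u]) (auto simp: ev_def)

lemma norm_Sev: "u \<in> V \<Longrightarrow> ell2_norm V (S (ev u)) = sqrt (real (card (Chi E u)))"
proof -
  have "(\<Sum>\<^sub>\<infinity>x\<in>V. (cmod (S (ev u) x))\<^sup>2) = (\<Sum>\<^sub>\<infinity>x\<in>Chi E u. 1)"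
    by (rule infsum_cong_neutral) (use Chi_sub in \<open>auto simp: S_ev\<close>)
  also have "\<dots> = real (card (Chi E u))" using finChi' by simp
  finally show ?thesis unfolding ell2_norm_def by simp
qed

lemma degb: "\<exists>D::nat. \<forall>u. deg E u \<le> D"
proof -
  obtain C where C: "\<And>f. f \<in> ell2 V \<Longrightarrow> ell2_norm V (S f) \<le> C * ell2_norm V f"
    using bdd unfolding bounded_op_def by blast
  obtain n where n: "C\<^sup>2 \<le> real n" using real_arch_simple by blast
  have "deg E u \<le> n" for u
  proof (cases "u \<in> V")
    case True
    have "sqrt (real (card (Chi E u))) \<le> C" using C[OF ev_ell2[OF True]] norm_ev[OF True] norm_Sev[OF True] by simp
    then have "(sqrt (real (card (Chi E u))))\<^sup>2 \<le> C\<^sup>2" by (rule power_mono) simp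
    then have "real (card (Chi E u)) \<le> real n" using n by simp
    then show ?thesis unfolding deg_def by simp
  next
    case False
    then have "Chi E u = {}" using Chi_iff edgeD by blast
    then show ?thesis unfolding deg_def by simp
  qed
  then show ?thesis by blast
qed

definition Dg :: nat where "Dg = (SOME D. \<forall>u. deg E u \<le> D)"
lemma deg_le: "deg E u \<le> Dg" using someI_ex[OF degb] unfolding Dg_def by blast

sublocale ftree V E by unfold_locales (rule finChi')

lemma Sig_E: "Sigma V (Chi E) = E" using E_sub Chi_iff by auto

definition Ast :: "('a \<Rightarrow> complex) \<Rightarrow> 'a \<Rightarrow> complex" where
  "Ast g = (if g \<in> ell2 V then (\<lambda>u. if u \<in> V then \<Sum>v\<in>Chi E u. g v else 0) else (\<lambda>_. 0))"

lemma Ast_apply: "g \<in> ell2 V \<Longrightarrow> Ast g u = (if u \<in> V then \<Sum>v\<in>Chi E u. g v else 0)"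
  unfolding Ast_def by simp

lemma sigma_summ:
  fixes h :: "'a \<Rightarrow> real"
  assumes "h summable_on V"
  shows "(\<lambda>(u,v). h v) summable_on Sigma V (Chi E)"
proof -
  have "snd ` E \<subseteq> V" using E_sub by auto
  then have "h summable_on snd ` E" by (rule summable_on_subset[OF assms])
  moreover have "inj_on snd E" using uniq by (auto simp: inj_on_def)
  ultimately have "(h \<circ> snd) summable_on E" using summable_on_reindex[of snd E h] by simp
  then show ?thesis unfolding Sig_E case_prod_unfold by (simp add: comp_def)
qed

lemma Ast_ell2:
  assumes g: "g \<in> ell2 V" shows "Ast g \<in> ell2 V"
proof -
  let ?q = "\<lambda>u. \<Sum>\<^sub>\<infinity>v\<in>Chi E u. (cmod (g v))\<^sup>2"
  have "?q summable_on V"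
    using summable_on_Sigma_banach[OF sigma_summ[OF ell2_summ[OF g]]] by simp
  then have "(\<lambda>u. real Dg * ?q u) summable_on V" by (rule summable_on_cmult_right)
  then have "(\<lambda>u. (cmod (Ast g u))\<^sup>2) summable_on V"
  proof (rule summable_on_comparison_test)
    fix u assume u: "u \<in> V"
    have "cmod (Ast g u) \<le> (\<Sum>v\<in>Chi E u. cmod (g v))" using Ast_apply[OF g] u norm_sum by simp
    then have "(cmod (Ast g u))\<^sup>2 \<le> (\<Sum>v\<in>Chi E u. cmod (g v))\<^sup>2" by (rule power_mono) simp
    also have "\<dots> \<le> (\<Sum>v\<in>Chi E u. (cmod (g v))\<^sup>2) * real (card (Chi E u))"
      by (rule sum_squared_le_sum_of_squares)
    also have "\<dots> \<le> (\<Sum>v\<in>Chi E u. (cmod (g v))\<^sup>2) * real Dg"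
      using deg_le[of u] unfolding deg_def by (intro mult_left_mono) (auto intro: sum_nonneg)
    also have "\<dots> = real Dg * ?q u" using finChi' by simp
    finally show "(cmod (Ast g u))\<^sup>2 \<le> real Dg * ?q u" .
  qed simp
  then show ?thesis unfolding ell2_def using Ast_apply[OF g] by simp
qed

lemma inner_adj:
  assumes f: "f \<in> ell2 V" and g: "g \<in> ell2 V"
  shows "ell2_inner V (S f) g = ell2_inner V f (Ast g)"
proof -
  let ?h = "\<lambda>v. cnj (S f v) * g v"
  have hs: "?h summable_on V" using prod_summable[OF S_ell2[OF f] g] .
  have inj: "inj_on snd E" using uniq by (auto simp: inj_on_def)
  have "ell2_inner V (S f) g = infsum ?h V" unfolding ell2_inner_def by simp
  also have "\<dots> = infsum ?h (snd ` E)"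
  proof (rule infsum_cong_neutral)
    fix v assume "v \<in> V - snd ` E"
    then have "\<forall>u. (u,v) \<notin> E" by force
    then show "?h v = 0" using S_nopar by simp
  qed (use E_sub in auto)
  also have "\<dots> = infsum (?h \<circ> snd) E" using infsum_reindex[OF inj] .
  also have "\<dots> = infsum (\<lambda>(u,v). cnj (f u) * g v) (Sigma V (Chi E))"
    unfolding Sig_E by (rule infsum_cong) (auto simp: S_child)
  also have "\<dots> = infsum (\<lambda>u. infsum (\<lambda>v. cnj (f u) * g v) (Chi E u)) V"
  proof (rule infsum_Sigma'_banach[symmetric])
    have "snd ` E \<subseteq> V" using E_sub by auto
    then have "?h summable_on snd ` E" by (rule summable_on_subset[OF hs])
    then have "(?h \<circ> snd) summable_on E" using summable_on_reindex[OF inj, of ?h] by simp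
    moreover have "(\<lambda>(u,v). cnj (f u) * g v) summable_on E \<longleftrightarrow> (?h \<circ> snd) summable_on E"
      by (rule summable_on_cong) (auto simp: S_child)
    ultimately show "(\<lambda>(u,v). cnj (f u) * g v) summable_on Sigma V (Chi E)"
      unfolding Sig_E by blast
  qed
  also have "\<dots> = infsum (\<lambda>u. cnj (f u) * Ast g u) V"
  proof (rule infsum_cong)
    fix u assume u: "u \<in> V"
    have "infsum (\<lambda>v. cnj (f u) * g v) (Chi E u) = (\<Sum>v\<in>Chi E u. cnj (f u) * g v)" using finChi' by simp
    also have "\<dots> = cnj (f u) * Ast g u" using Ast_apply[OF g] u by (simp add: sum_distrib_left)
    finally show "infsum (\<lambda>v. cnj (f u) * g v) (Chi E u) = cnj (f u) * Ast g u" .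
  qed
  also have "\<dots> = ell2_inner V f (Ast g)" unfolding ell2_inner_def by simp
  finally show ?thesis .
qed

lemma adjS: "adjoint V S = Ast"
proof (rule adjoint_eqI)
  show "g \<in> ell2 V \<Longrightarrow> Ast g \<in> ell2 V" for g by (rule Ast_ell2)
  show "f \<in> ell2 V \<Longrightarrow> g \<in> ell2 V \<Longrightarrow> ell2_inner V (S f) g = ell2_inner V f (Ast g)" for f g by (rule inner_adj)
  show "g \<notin> ell2 V \<Longrightarrow> Ast g = (\<lambda>_. 0)" for g by (simp add: Ast_def)
qed

definition Sc :: "('a \<Rightarrow> complex) \<Rightarrow> 'a \<Rightarrow> complex" where
  "Sc g = (if g \<in> ell2 V then S g else (\<lambda>_. 0))"

lemma adjAst: "adjoint V Ast = Sc"
proof (rule adjoint_eqI)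
  show "g \<in> ell2 V \<Longrightarrow> Sc g \<in> ell2 V" for g by (simp add: Sc_def S_ell2)
  show "g \<notin> ell2 V \<Longrightarrow> Sc g = (\<lambda>_. 0)" for g by (simp add: Sc_def)
  fix f g assume f: "f \<in> ell2 V" and g: "g \<in> ell2 V"
  have "ell2_inner V (Ast f) g = cnj (ell2_inner V g (Ast f))" by (rule inner_cnj)
  also have "\<dots> = cnj (ell2_inner V (S g) f)" using inner_adj[OF g f] by simp
  also have "\<dots> = ell2_inner V f (S g)" using inner_cnj[of V f "S g"] by simp
  finally show "ell2_inner V (Ast f) g = ell2_inner V f (Sc g)" using g by (simp add: Sc_def)
qed

end


context adj begin

lemma Ast_ell2_all: "Ast g \<in> ell2 V"
  using Ast_ell2[of g] ell2_0 unfolding Ast_def by auto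

lemma AS: "f \<in> ell2 V \<Longrightarrow> Ast (S f) = (\<lambda>u. if u \<in> V then of_nat (deg E u) * f u else 0)"
proof
  fix u assume f: "f \<in> ell2 V"
  show "Ast (S f) u = (if u \<in> V then of_nat (deg E u) * f u else 0)"
  proof (cases "u \<in> V")
    case True
    have "(\<Sum>v\<in>Chi E u. S f v) = (\<Sum>v\<in>Chi E u. f u)" by (rule sum.cong) (auto simp: Chi_iff S_child)
    then show ?thesis using True Ast_apply[OF S_ell2[OF f]] unfolding deg_def by simp
  qed (simp add: Ast_apply[OF S_ell2[OF f]])
qed

lemma AAS: "f \<in> ell2 V \<Longrightarrow> Ast (Ast (S f)) = (\<lambda>u. if u \<in> V then \<Sum>v\<in>Chi E u. of_nat (deg E v) * f v else 0)"
proof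
  fix u assume f: "f \<in> ell2 V"
  have e: "Ast (Ast (S f)) u = (if u \<in> V then \<Sum>v\<in>Chi E u. Ast (S f) v else 0)"
    using Ast_apply[OF Ast_ell2_all] by blast
  have "(\<Sum>v\<in>Chi E u. Ast (S f) v) = (\<Sum>v\<in>Chi E u. of_nat (deg E v) * f v)"
    by (rule sum.cong) (use Chi_sub in \<open>auto simp: AS[OF f]\<close>)
  then show "Ast (Ast (S f)) u = (if u \<in> V then \<Sum>v\<in>Chi E u. of_nat (deg E v) * f v else 0)"
    using e by simp
qed

lemma AASS: "f \<in> ell2 V \<Longrightarrow> Ast (Ast (S (S f))) = (\<lambda>u. if u \<in> V then of_nat (sdeg u) * f u else 0)"
proof
  fix u assume f: "f \<in> ell2 V"
  show "Ast (Ast (S (S f))) u = (if u \<in> V then of_nat (sdeg u) * f u else 0)"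
  proof (cases "u \<in> V")
    case True
    have "(\<Sum>v\<in>Chi E u. of_nat (deg E v) * S f v) = (\<Sum>v\<in>Chi E u. of_nat (deg E v) * f u)"
      by (rule sum.cong) (auto simp: Chi_iff S_child)
    also have "\<dots> = of_nat (sdeg u) * f u" unfolding sdeg_def by (simp add: sum_distrib_right)
    finally show ?thesis using True AAS[OF S_ell2[OF f]] by simp
  qed (simp add: AAS[OF S_ell2[OF f]])
qed

lemma two_iso_iff: "two_isometry V S \<longleftrightarrow> TI"
proof
  assume T: "two_isometry V S"
  show TI unfolding TI_def
  proof
    fix u assume u: "u \<in> V"
    have "(\<lambda>x. ev u x - 2 * Ast (S (ev u)) x + Ast (Ast (S (S (ev u)))) x) = (\<lambda>_. 0)"
      using T ev_ell2[OF u] unfolding two_isometry_def adjS by blast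
    then have "ev u u - 2 * Ast (S (ev u)) u + Ast (Ast (S (S (ev u)))) u = 0" by metis
    then have "1 - 2 * of_nat (deg E u) + of_nat (sdeg u) = (0::complex)"
      using u by (simp only: AS[OF ev_ell2[OF u]] AASS[OF ev_ell2[OF u]]) (simp add: ev_def)
    then have "of_nat (1 + sdeg u) = (of_nat (2 * deg E u) :: complex)" by (simp add: algebra_simps)
    then show "1 + sdeg u = 2 * deg E u" using of_nat_eq_iff by blast
  qed
next
  assume T: TI
  show "two_isometry V S" unfolding two_isometry_def adjS
  proof (intro ballI ext)
    fix f x assume f: "f \<in> ell2 V"
    show "f x - 2 * Ast (S f) x + Ast (Ast (S (S f))) x = 0"
    proof (cases "x \<in> V")
      case True
      have "of_nat (1 + sdeg x) = (of_nat (2 * deg E x) :: complex)" using T True unfolding TI_def by metis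
      then have "1 + of_nat (sdeg x) = 2 * (of_nat (deg E x)::complex)" by simp
      then have "f x * (1 + of_nat (sdeg x)) = f x * (2 * of_nat (deg E x))" by simp
      then show ?thesis using True by (simp add: AS[OF f] AASS[OF f] algebra_simps)
    next
      case False
      then show ?thesis using ell2_zero_out[OF f] by (simp add: AS[OF f] AASS[OF f])
    qed
  qed
qed

lemma sum_ev: "finite A \<Longrightarrow> (\<Sum>y\<in>A. c y * ev v y) = (if v \<in> A then c v else 0)"
  unfolding ev_def by (simp add: if_distrib cong: if_cong)

lemma ker_iff: "two_isometry V S \<and> kernel_condition V S \<longleftrightarrow> All1"
proof
  assume A: All1
  have d: "x \<in> V \<Longrightarrow> deg E x = 1" for x using A unfolding All1_def by blast
  have "kernel_condition V S" unfolding kernel_condition_def adjS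
  proof (intro ballI impI ext)
    fix f x assume f: "f \<in> ell2 V" and k: "Ast f = (\<lambda>_. 0)"
    show "Ast (Ast (S f)) x = 0"
    proof (cases "x \<in> V")
      case True
      have "(\<Sum>v\<in>Chi E x. of_nat (deg E v) * f v) = (\<Sum>v\<in>Chi E x. f v)"
        by (rule sum.cong) (use Chi_sub d in auto)
      also have "\<dots> = Ast f x" using Ast_apply[OF f] True by simp
      finally show ?thesis using True k by (simp add: AAS[OF f])
    qed (simp add: AAS[OF f])
  qed
  then show "two_isometry V S \<and> kernel_condition V S" using All1_all[OF A] two_iso_iff by blast
next
  assume h: "two_isometry V S \<and> kernel_condition V S"
  then have T: TI using two_iso_iff by blast
  have K: "\<And>f. f \<in> ell2 V \<Longrightarrow> Ast f = (\<lambda>_. 0) \<Longrightarrow> Ast (Ast (S f)) = (\<lambda>_. 0)"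
    using h unfolding kernel_condition_def adjS by blast
  show All1 unfolding All1_def
  proof (rule ballI, rule ccontr)
    fix u assume u: "u \<in> V" and ne: "deg E u \<noteq> 1"
    have ti: "1 + sdeg u = 2 * deg E u" using T u unfolding TI_def by blast
    then have d2: "deg E u \<ge> 2" using ne by linarith
    have eq: "deg E v = deg E w" if v: "v \<in> Chi E u" and w: "w \<in> Chi E u" for v w
    proof (cases "v = w")
      case False
      define f where "f = (\<lambda>x. 1 * ev v x + (-1) * ev w x)"
      have vV: "v \<in> V" and wV: "w \<in> V" using v w Chi_sub by auto
      have f: "f \<in> ell2 V" unfolding f_def by (rule ell2_lin[OF ev_ell2[OF vV] ev_ell2[OF wV]])
      have fA: "Ast f = (\<lambda>_. 0)"
      proof
        fix x
        have "v \<in> Chi E x \<longleftrightarrow> x = u" "w \<in> Chi E x \<longleftrightarrow> x = u" using v w uniq Chi_iff by blast+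
        moreover have "(\<Sum>y\<in>Chi E x. f y) = (\<Sum>y\<in>Chi E x. 1 * ev v y) - (\<Sum>y\<in>Chi E x. 1 * ev w y)"
          unfolding f_def by (simp add: sum_subtractf)
        ultimately have "(\<Sum>y\<in>Chi E x. f y) = 0" by (simp only: sum_ev[OF finChi']) simp
        then show "Ast f x = 0" using Ast_apply[OF f] by simp
      qed
      have "Ast (Ast (S f)) u = 0" using K[OF f fA] by simp
      moreover have "Ast (Ast (S f)) u = (\<Sum>y\<in>Chi E u. of_nat (deg E y) * ev v y) - (\<Sum>y\<in>Chi E u. of_nat (deg E y) * ev w y)"
        using u by (simp only: AAS[OF f]) (simp add: f_def sum_subtractf algebra_simps)
      ultimately have "(of_nat (deg E v) :: complex) = of_nat (deg E w)" using v w by (simp add: sum_ev[OF finChi'])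
      then show ?thesis by simp
    qed simp
    have "Chi E u \<noteq> {}" using d2 unfolding deg_def by auto
    then obtain v where v: "v \<in> Chi E u" by blast
    have "sdeg u = (\<Sum>w\<in>Chi E u. deg E v)" unfolding sdeg_def by (rule sum.cong[OF refl], rule eq, assumption, rule v)
    then have "sdeg u = deg E u * deg E v" unfolding deg_def by simp
    then have e: "1 + deg E u * deg E v = 2 * deg E u" using ti by simp
    show False
    proof (cases "deg E v \<ge> 2")
      case True
      then have "deg E u * deg E v \<ge> deg E u * 2" by (rule mult_le_mono2)
      then show False using e by linarith
    next
      case False
      then have "deg E v = 0 \<or> deg E v = 1" by linarith
      then show False using e d2 by auto
    qed
  qed
qed

definition DD :: "('a \<Rightarrow> complex) \<Rightarrow> 'a \<Rightarrow> complex" where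
  "DD f = (\<lambda>x. if x \<in> V then (of_nat (deg E x) - 1) * f x else 0)"

lemma DeltaS: "f \<in> ell2 V \<Longrightarrow> Delta V S f = DD f"
  unfolding Delta_def adjS DD_def by (auto simp: AS algebra_simps ell2_zero_out)

lemma DD_ell2: assumes f: "f \<in> ell2 V" shows "DD f \<in> ell2 V"
proof -
  have "(\<lambda>x. 1 * Ast (S f) x + (-1) * f x) \<in> ell2 V" by (rule ell2_lin[OF Ast_ell2_all f])
  moreover have "(\<lambda>x. 1 * Ast (S f) x + (-1) * f x) = DD f" using DeltaS[OF f] unfolding Delta_def adjS by simp
  ultimately show ?thesis by simp
qed

lemma DeltaAst: "Delta V Ast g = (\<lambda>x. S (Ast g) x - g x)"
  unfolding Delta_def adjAst Sc_def using Ast_ell2_all by simp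

lemma brown_iff: "brownian_isometry V S \<longleftrightarrow> TI \<and> Sib \<and> R1"
proof
  assume B: "brownian_isometry V S"
  then have T: TI using two_iso_iff unfolding brownian_isometry_def by blast
  have B2: "\<And>f. f \<in> ell2 V \<Longrightarrow> Delta V S (Delta V (adjoint V S) (Delta V S f)) = (\<lambda>_. 0)"
    using B unfolding brownian_isometry_def by blast
  have key: "DD (\<lambda>x. S (Ast (DD (ev v))) x - DD (ev v) x) = (\<lambda>_. 0)" if v: "v \<in> V" for v
  proof -
    have "Delta V (adjoint V S) (Delta V S (ev v)) = (\<lambda>x. S (Ast (DD (ev v))) x - DD (ev v) x)"
      unfolding adjS DeltaAst DeltaS[OF ev_ell2[OF v]] ..
    moreover have "(\<lambda>x. S (Ast (DD (ev v))) x - DD (ev v) x) \<in> ell2 V"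
      using ell2_lin[OF S_ell2[OF Ast_ell2_all] DD_ell2[OF ev_ell2[OF v]], where a=1 and b="-1"] by simp
    ultimately show ?thesis using B2[OF ev_ell2[OF v]] DeltaS by metis
  qed
  have R1 unfolding R1_def
  proof (intro ballI impI)
    fix v assume v: "v \<in> V" and r: "\<forall>u. (u, v) \<notin> E"
    have "DD (\<lambda>x. S (Ast (DD (ev v))) x - DD (ev v) x) v = 0" using key[OF v] by metis
    then have "(of_nat (deg E v) - 1) * (0 - (of_nat (deg E v) - 1)) = (0::complex)"
      using v S_nopar[OF r] by (simp add: DD_def ev_def)
    then have "(of_nat (deg E v) :: complex) = 1" by simp
    then show "deg E v = 1" by simp
  qed
  moreover have Sib unfolding Sib_def
  proof (intro allI impI)
    fix p v w assume pv: "(p,v) \<in> E" and pw: "(p,w) \<in> E" and ne: "v \<noteq> w" and dv: "deg E v \<noteq> 1"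
    have vV: "v \<in> V" and wV: "w \<in> V" and pV: "p \<in> V" using pv pw edgeD by auto
    have "DD (\<lambda>x. S (Ast (DD (ev v))) x - DD (ev v) x) w = 0" using key[OF vV] by metis
    moreover have "S (Ast (DD (ev v))) w = Ast (DD (ev v)) p" using S_child[OF pw] .
    moreover have "Ast (DD (ev v)) p = (\<Sum>y\<in>Chi E p. DD (ev v) y)" using Ast_apply[OF DD_ell2[OF ev_ell2[OF vV]]] pV by simp
    moreover have "(\<Sum>y\<in>Chi E p. DD (ev v) y) = (\<Sum>y\<in>Chi E p. (if y \<in> V then of_nat (deg E y) - 1 else 0) * ev v y)"
      unfolding DD_def by (rule sum.cong) auto
    moreover have "\<dots> = of_nat (deg E v) - 1" using pv vV Chi_iff by (simp add: sum_ev[OF finChi'])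
    ultimately have "(of_nat (deg E w) - 1) * (of_nat (deg E v) - 1) = (0::complex)"
      using wV ne by (simp add: DD_def ev_def)
    then have "(of_nat (deg E w) :: complex) = 1" using dv by simp
    then show "deg E w = 1" by simp
  qed
  ultimately show "TI \<and> Sib \<and> R1" using T by blast
next
  assume h: "TI \<and> Sib \<and> R1"
  show "brownian_isometry V S" unfolding brownian_isometry_def
  proof (intro conjI ballI)
    show "two_isometry V S" using h two_iso_iff by blast
    fix f assume f: "f \<in> ell2 V"
    let ?g = "DD f"
    let ?h = "\<lambda>x. S (Ast ?g) x - ?g x"
    have hl: "?h \<in> ell2 V" using ell2_lin[OF S_ell2[OF Ast_ell2_all] DD_ell2[OF f], where a=1 and b="-1"] by simp
    have "Delta V S (Delta V (adjoint V S) (Delta V S f)) = DD ?h"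
      unfolding adjS DeltaAst DeltaS[OF f] DeltaS[OF hl] ..
    also have "DD ?h = (\<lambda>_. 0)"
    proof
      fix x show "DD ?h x = 0"
      proof (cases "x \<in> V \<and> deg E x \<noteq> 1")
        case True
        then obtain p where px: "(p,x) \<in> E" using h unfolding R1_def by blast
        have pV: "p \<in> V" using px edgeD by auto
        have "?h x = (\<Sum>y\<in>Chi E p. ?g y) - ?g x" using S_child[OF px] Ast_apply[OF DD_ell2[OF f]] pV by simp
        also have "(\<Sum>y\<in>Chi E p. ?g y) = ?g x + (\<Sum>y\<in>Chi E p - {x}. ?g y)"
          using sum.remove[OF finChi', of x p] px Chi_iff by blast
        also have "(\<Sum>y\<in>Chi E p - {x}. ?g y) = 0"
        proof (rule sum.neutral, rule ballI)
          fix y assume y: "y \<in> Chi E p - {x}"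
          then have "deg E y = 1" using h True px Chi_iff unfolding Sib_def by blast
          then show "?g y = 0" unfolding DD_def by simp
        qed
        finally show ?thesis unfolding DD_def by simp
      next
        case False then show ?thesis unfolding DD_def by auto
      qed
    qed
    finally show "Delta V S (Delta V (adjoint V S) (Delta V S f)) = (\<lambda>_. 0)" .
  qed
qed


lemma TI_deg: assumes "TI" "u \<in> V" shows "deg E u \<ge> 1"
proof -
  have "1 + sdeg u = 2 * deg E u" using assms unfolding TI_def by blast
  then show ?thesis by linarith
qed

definition aa :: "'a \<Rightarrow> real" where "aa u = sqrt (real (deg E u) - 1)"
definition Rt :: "('a \<Rightarrow> complex) \<Rightarrow> 'a \<Rightarrow> complex" where
  "Rt f = (if f \<in> ell2 V then (\<lambda>u. complex_of_real (aa u) * f u) else (\<lambda>_. 0))"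

lemma aa_nonneg: "TI \<Longrightarrow> u \<in> V \<Longrightarrow> aa u \<ge> 0"
  unfolding aa_def using TI_deg by simp

lemma aa_sq: "TI \<Longrightarrow> u \<in> V \<Longrightarrow> aa u * aa u = real (deg E u) - 1"
  unfolding aa_def using TI_deg by simp

lemma aa_bd: "\<bar>aa u\<bar> \<le> sqrt (real Dg + 1)"
proof -
  have "\<bar>real (deg E u) - 1\<bar> \<le> real Dg + 1" using deg_le[of u] by linarith
  then have "sqrt \<bar>real (deg E u) - 1\<bar> \<le> sqrt (real Dg + 1)" by (rule real_sqrt_le_mono)
  then show ?thesis unfolding aa_def real_sqrt_abs' .
qed

lemma Rt_apply: "f \<in> ell2 V \<Longrightarrow> Rt f = (\<lambda>u. complex_of_real (aa u) * f u)"
  unfolding Rt_def by simp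

lemma Rt_ell2: "f \<in> ell2 V \<Longrightarrow> Rt f \<in> ell2 V"
  unfolding Rt_apply by (rule ell2_scale[where K = "sqrt (real Dg + 1)"]) (use aa_bd in auto)

lemma Rt_lin: "f \<in> ell2 V \<Longrightarrow> g \<in> ell2 V \<Longrightarrow> Rt (\<lambda>x. a * f x + b * g x) = (\<lambda>x. a * Rt f x + b * Rt g x)"
  using ell2_lin[of f V g a b] by (simp add: Rt_apply algebra_simps)

lemma Rt_bounded: "bounded_op V Rt"
  unfolding bounded_op_def
proof (intro conjI ballI allI)
  show "Rt f \<in> ell2 V" if "f \<in> ell2 V" for f using Rt_ell2 that .
  show "Rt (\<lambda>x. a * f x + b * g x) = (\<lambda>x. a * Rt f x + b * Rt g x)" if "f \<in> ell2 V" "g \<in> ell2 V" for f g a b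
    using Rt_lin that .
  show "\<exists>C. \<forall>f\<in>ell2 V. ell2_norm V (Rt f) \<le> C * ell2_norm V f"
  proof (intro exI ballI)
    fix f assume f: "f \<in> ell2 V"
    have "(\<Sum>\<^sub>\<infinity>x\<in>V. (cmod (Rt f x))\<^sup>2) \<le> (\<Sum>\<^sub>\<infinity>x\<in>V. (real Dg + 1) * (cmod (f x))\<^sup>2)"
    proof (rule infsum_mono)
      show "(\<lambda>x. (cmod (Rt f x))\<^sup>2) summable_on V" using ell2_summ[OF Rt_ell2[OF f]] .
      show "(\<lambda>x. (real Dg + 1) * (cmod (f x))\<^sup>2) summable_on V" using summable_on_cmult_right[OF ell2_summ[OF f]] .
      fix x
      have "(cmod (Rt f x))\<^sup>2 = (\<bar>aa x\<bar>)\<^sup>2 * (cmod (f x))\<^sup>2" by (simp add: Rt_apply[OF f] norm_mult power_mult_distrib)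
      also have "\<dots> \<le> (sqrt (real Dg + 1))\<^sup>2 * (cmod (f x))\<^sup>2"
        by (intro mult_right_mono power_mono aa_bd) auto
      finally show "(cmod (Rt f x))\<^sup>2 \<le> (real Dg + 1) * (cmod (f x))\<^sup>2" by simp
    qed
    also have "\<dots> = (real Dg + 1) * (\<Sum>\<^sub>\<infinity>x\<in>V. (cmod (f x))\<^sup>2)" by (rule infsum_cmult_right) (use ell2_summ[OF f] in auto)
    finally have "sqrt (\<Sum>\<^sub>\<infinity>x\<in>V. (cmod (Rt f x))\<^sup>2) \<le> sqrt ((real Dg + 1) * (\<Sum>\<^sub>\<infinity>x\<in>V. (cmod (f x))\<^sup>2))"
      by (rule real_sqrt_le_mono)
    then show "ell2_norm V (Rt f) \<le> sqrt (real Dg + 1) * ell2_norm V f"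
      unfolding ell2_norm_def by (simp add: real_sqrt_mult)
  qed
qed

lemma cnj_real_mult: "cnj (complex_of_real a * z) * z = complex_of_real (a * (cmod z)\<^sup>2)"
proof -
  have h: "cnj z * z = complex_of_real ((cmod z)\<^sup>2)" by (metis complex_norm_square mult.commute of_real_power)
  have "cnj (complex_of_real a * z) * z = complex_of_real a * (cnj z * z)" by simp
  also have "\<dots> = complex_of_real a * complex_of_real ((cmod z)\<^sup>2)" using h by simp
  finally show ?thesis by simp
qed

lemma Rt_pos: assumes T: TI shows "positive_op V Rt"
  unfolding positive_op_def
proof (intro ballI conjI)
  fix f assume f: "f \<in> ell2 V"
  let ?g = "\<lambda>x. aa x * (cmod (f x))\<^sup>2"
  have gs: "?g summable_on V"
  proof (rule summable_on_comparison_test)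
    show "(\<lambda>x. sqrt (real Dg + 1) * (cmod (f x))\<^sup>2) summable_on V" using summable_on_cmult_right[OF ell2_summ[OF f]] .
    fix x assume x: "x \<in> V"
    show "0 \<le> ?g x" using aa_nonneg[OF T x] by simp
    show "?g x \<le> sqrt (real Dg + 1) * (cmod (f x))\<^sup>2" using aa_bd[of x] aa_nonneg[OF T x]
      by (intro mult_right_mono) auto
  qed
  have "ell2_inner V (Rt f) f = (\<Sum>\<^sub>\<infinity>x\<in>V. complex_of_real (?g x))"
    unfolding ell2_inner_def Rt_apply[OF f]
    by (rule infsum_cong) (rule cnj_real_mult)
  also have "\<dots> = of_real (infsum ?g V)" using infsum_of_real'[OF gs] .
  finally have e: "ell2_inner V (Rt f) f = of_real (infsum ?g V)" .
  show "Im (ell2_inner V (Rt f) f) = 0" unfolding e by simp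
  have "infsum ?g V \<ge> 0" by (rule infsum_nonneg) (use aa_nonneg[OF T] in simp)
  then show "Re (ell2_inner V (Rt f) f) \<ge> 0" unfolding e by simp
qed

lemma Rt_sq: assumes T: TI and f: "f \<in> ell2 V" shows "Rt (Rt f) = Delta V S f"
proof
  fix x
  have RR: "Rt (Rt f) x = complex_of_real (aa x) * (complex_of_real (aa x) * f x)"
    by (simp only: Rt_apply[OF Rt_ell2[OF f]]) (simp add: Rt_apply[OF f])
  show "Rt (Rt f) x = Delta V S f x"
  proof (cases "x \<in> V")
    case True
    have "complex_of_real (aa x) * (complex_of_real (aa x) * f x) = complex_of_real (aa x * aa x) * f x" by simp
    also have "\<dots> = (of_nat (deg E x) - 1) * f x" using aa_sq[OF T True] by simp
    finally show ?thesis using True RR by (simp add: DeltaS[OF f] DD_def)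
  next
    case False
    then show ?thesis using RR by (simp add: DeltaS[OF f] DD_def ell2_zero_out[OF f])
  qed
qed

lemma inner_right:
  assumes "p \<in> ell2 V" "q \<in> ell2 V" "r \<in> ell2 V"
  shows "ell2_inner V r (\<lambda>x. a * p x + b * q x) = a * ell2_inner V r p + b * ell2_inner V r q"
proof -
  have s1: "(\<lambda>x. cnj (r x) * p x) summable_on V" and s2: "(\<lambda>x. cnj (r x) * q x) summable_on V"
    using prod_summable assms by blast+
  have "ell2_inner V r (\<lambda>x. a * p x + b * q x) = (\<Sum>\<^sub>\<infinity>x\<in>V. a * (cnj (r x) * p x) + b * (cnj (r x) * q x))"
    unfolding ell2_inner_def by (rule infsum_cong) (simp add: algebra_simps)
  also have "\<dots> = (\<Sum>\<^sub>\<infinity>x\<in>V. a * (cnj (r x) * p x)) + (\<Sum>\<^sub>\<infinity>x\<in>V. b * (cnj (r x) * q x))"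
    by (rule infsum_add) (use summable_on_cmult_right s1 s2 in auto)
  also have "\<dots> = a * ell2_inner V r p + b * ell2_inner V r q"
    unfolding ell2_inner_def by (simp add: infsum_cmult_right s1 s2)
  finally show ?thesis .
qed

lemma inner_left_scal:
  assumes "p \<in> ell2 V" "q \<in> ell2 V"
  shows "ell2_inner V (\<lambda>x. c * p x) q = cnj c * ell2_inner V p q"
proof -
  have "ell2_inner V (\<lambda>x. c * p x) q = (\<Sum>\<^sub>\<infinity>x\<in>V. cnj c * (cnj (p x) * q x))"
    unfolding ell2_inner_def by (rule infsum_cong) (simp add: algebra_simps)
  also have "\<dots> = cnj c * ell2_inner V p q"
    unfolding ell2_inner_def by (rule infsum_cmult_right) (use prod_summable assms in blast)
  finally show ?thesis .
qed

lemma inner_self_ge: "p \<in> ell2 V \<Longrightarrow> Re (ell2_inner V p p) \<ge> 0"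
  using inner_self[of p V] by (simp add: infsum_nonneg)

lemma inner_self_zero:
  assumes p: "p \<in> ell2 V" and le: "Re (ell2_inner V p p) \<le> 0"
  shows "p = (\<lambda>_. 0)"
proof
  fix x show "p x = 0"
  proof (cases "x \<in> V")
    case True
    have "(\<Sum>\<^sub>\<infinity>x\<in>V. (cmod (p x))\<^sup>2) \<le> 0" using le inner_self[OF p] by simp
    then have "(cmod (p x))\<^sup>2 = 0" using nonneg_infsum_le_0D[OF _ ell2_summ[OF p] _ True] by simp
    then show ?thesis by simp
  qed (use ell2_zero_out[OF p] in simp)
qed

lemma eig:
  assumes bR: "bounded_op V R" and pR: "positive_op V R" and sqR: "\<forall>g\<in>ell2 V. R (R g) = Delta V S g"
    and h: "h \<in> ell2 V" and eh: "Delta V S h = (\<lambda>x. of_real lam * h x)" and lam: "lam \<ge> 0"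
  shows "R h = (\<lambda>x. of_real (sqrt lam) * h x)"
proof -
  have lin: "\<And>p q a b. p \<in> ell2 V \<Longrightarrow> q \<in> ell2 V \<Longrightarrow> R (\<lambda>x. a * p x + b * q x) = (\<lambda>x. a * R p x + b * R q x)"
    using bR unfolding bounded_op_def by blast
  have Rl: "\<And>p. p \<in> ell2 V \<Longrightarrow> R p \<in> ell2 V" using bR unfolding bounded_op_def by blast
  have pos: "\<And>p. p \<in> ell2 V \<Longrightarrow> Re (ell2_inner V (R p) p) \<ge> 0" using pR unfolding positive_op_def by blast
  have RRh: "R (R h) = (\<lambda>x. of_real lam * h x)" using sqR h eh by simp
  define s where "s = sqrt lam"
  have ss: "s * s = lam" unfolding s_def using lam by simp
  show ?thesis
  proof (cases "lam > 0")
    case True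
    then have sp: "s > 0" unfolding s_def by simp
    define m where "m = (\<lambda>x. 1 * R h x + (- of_real s) * h x)"
    have ml: "m \<in> ell2 V" unfolding m_def by (rule ell2_lin[OF Rl[OF h] h])
    have "R m = (\<lambda>x. 1 * R (R h) x + (- of_real s) * R h x)" unfolding m_def by (rule lin[OF Rl[OF h] h])
    also have "\<dots> = (\<lambda>x. (- of_real s) * m x)"
    proof
      fix x
      have "complex_of_real lam = of_real s * of_real s" using ss by (metis of_real_mult)
      then show "1 * R (R h) x + (- of_real s) * R h x = (- of_real s) * m x"
        unfolding RRh m_def by (simp add: algebra_simps)
    qed
    finally have Rm: "R m = (\<lambda>x. (- of_real s) * m x)" .
    have "0 \<le> Re (ell2_inner V (R m) m)" using pos[OF ml] .
    also have "ell2_inner V (R m) m = (- of_real s) * ell2_inner V m m" unfolding Rm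
      using inner_left_scal[OF ml ml, of "- complex_of_real s"] by simp
    finally have "0 \<le> - s * Re (ell2_inner V m m)" by simp
    then have "Re (ell2_inner V m m) \<le> 0" using sp by (simp add: mult_le_0_iff)
    then have m0: "m = (\<lambda>_. 0)" using inner_self_zero[OF ml] by blast
    show ?thesis
    proof
      fix x have "m x = 0" using m0 by simp
      then show "R h x = of_real (sqrt lam) * h x" unfolding m_def s_def by (simp add: algebra_simps)
    qed
  next
    case False
    then have l0: "lam = 0" using lam by simp
    define r where "r = R h"
    have rl: "r \<in> ell2 V" unfolding r_def using Rl[OF h] .
    have Rr: "R r = (\<lambda>_. 0)" unfolding r_def RRh l0 by simp
    have ineq: "0 \<le> Re (ell2_inner V r h) + t * Re (ell2_inner V r r)" for t :: real
    proof -
      define p where "p = (\<lambda>x. 1 * h x + complex_of_real t * r x)"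
      have pl: "p \<in> ell2 V" unfolding p_def by (rule ell2_lin[OF h rl])
      have "R p = (\<lambda>x. 1 * R h x + complex_of_real t * R r x)" unfolding p_def by (rule lin[OF h rl])
      then have Rp: "R p = r" using Rr unfolding r_def by simp
      have "ell2_inner V r p = 1 * ell2_inner V r h + complex_of_real t * ell2_inner V r r"
        unfolding p_def by (rule inner_right[OF h rl rl])
      then have "Re (ell2_inner V r p) = Re (ell2_inner V r h) + t * Re (ell2_inner V r r)" by simp
      then show ?thesis using pos[OF pl] Rp by simp
    qed
    have "Re (ell2_inner V r r) \<le> 0"
    proof (rule ccontr)
      assume "\<not> Re (ell2_inner V r r) \<le> 0"
      then have N: "Re (ell2_inner V r r) > 0" by simp
      define c where "c = Re (ell2_inner V r h)"
      define N where "N = Re (ell2_inner V r r)"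
      have "0 \<le> c + (- (\<bar>c\<bar> + 1) / N) * N" using ineq unfolding c_def N_def by blast
      also have "\<dots> = c - \<bar>c\<bar> - 1" using N unfolding N_def by simp
      finally show False by simp
    qed
    then have "r = (\<lambda>_. 0)" using inner_self_zero[OF rl] by blast
    then show ?thesis unfolding r_def l0 by simp
  qed
qed

lemma sqrt_eq: assumes T: TI shows "sqrt_op V (Delta V S) = Rt"
  unfolding sqrt_op_def
proof (rule the_equality)
  show "bounded_op V Rt \<and> positive_op V Rt \<and> (\<forall>f\<in>ell2 V. Rt (Rt f) = Delta V S f) \<and> (\<forall>f. f \<notin> ell2 V \<longrightarrow> Rt f = (\<lambda>_. 0))"
    using Rt_bounded Rt_pos[OF T] Rt_sq[OF T] by (simp add: Rt_def)
  fix R assume H: "bounded_op V R \<and> positive_op V R \<and> (\<forall>f\<in>ell2 V. R (R f) = Delta V S f) \<and> (\<forall>f. f \<notin> ell2 V \<longrightarrow> R f = (\<lambda>_. 0))"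
  have lin: "\<And>p q a b. p \<in> ell2 V \<Longrightarrow> q \<in> ell2 V \<Longrightarrow> R (\<lambda>x. a * p x + b * q x) = (\<lambda>x. a * R p x + b * R q x)"
    using H unfolding bounded_op_def by blast
  show "R = Rt"
  proof
    fix f show "R f = Rt f"
    proof (cases "f \<in> ell2 V")
      case False then show ?thesis using H by (simp add: Rt_def)
    next
      case f: True
      define F where "F K = (\<lambda>u. if deg E u \<in> K then f u else 0)" for K
      have Fl: "F K \<in> ell2 V" for K unfolding F_def by (rule ell2_restrict[OF f])
      have claim: "finite K \<Longrightarrow> K \<subseteq> {1..Dg} \<Longrightarrow> R (F K) = Rt (F K)" for K
      proof (induction K rule: finite_induct)
        case empty
        have F0: "F {} = (\<lambda>_. 0)" unfolding F_def by simp
        have "R (\<lambda>x. 0 * (0::complex) + 0 * 0) = (\<lambda>x. 0 * R (\<lambda>_. 0) x + 0 * R (\<lambda>_. 0) x)"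
          using lin[OF ell2_0 ell2_0, of 0 0] by simp
        then have "R (\<lambda>_. 0) = (\<lambda>_. 0)" by simp
        moreover have "Rt (\<lambda>_. 0) = (\<lambda>_. 0)" using Rt_apply[OF ell2_0] by simp
        ultimately show ?case unfolding F0 by simp
      next
        case (insert k K)
        then have k1: "k \<ge> 1" by auto
        have split: "F (insert k K) = (\<lambda>x. 1 * F {k} x + 1 * F K x)"
          unfolding F_def using insert(2) by auto
        have eh: "Delta V S (F {k}) = (\<lambda>x. of_real (real k - 1) * F {k} x)"
        proof
          fix x
          have d: "Delta V S (F {k}) = DD (F {k})" by (rule DeltaS[OF Fl])
          show "Delta V S (F {k}) x = of_real (real k - 1) * F {k} x"
            unfolding d unfolding DD_def F_def using ell2_zero_out[OF f] by auto
        qed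
        have "R (F {k}) = (\<lambda>x. of_real (sqrt (real k - 1)) * F {k} x)"
          by (rule eig[OF _ _ _ Fl eh]) (use H k1 in auto)
        also have "\<dots> = Rt (F {k})"
          unfolding Rt_apply[OF Fl] by (auto simp: F_def aa_def)
        finally have Rk: "R (F {k}) = Rt (F {k})" .
        have "R (F (insert k K)) = (\<lambda>x. 1 * R (F {k}) x + 1 * R (F K) x)" unfolding split by (rule lin[OF Fl Fl])
        also have "\<dots> = (\<lambda>x. 1 * Rt (F {k}) x + 1 * Rt (F K) x)" using Rk insert by simp
        also have "\<dots> = Rt (F (insert k K))" unfolding split by (rule Rt_lin[OF Fl Fl, symmetric])
        finally show ?case .
      qed
      have "F {1..Dg} = f"
      proof
        fix u show "F {1..Dg} u = f u"
          unfolding F_def using TI_deg[OF T, of u] deg_le[of u] ell2_zero_out[OF f, of u] by auto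
      qed
      then show ?thesis using claim[of "{1..Dg}"] by simp
    qed
  qed
qed

lemma sqrt_eq_real:
  fixes x y :: real
  assumes "x \<ge> 0" "y \<ge> 0"
  shows "x = sqrt x * sqrt y \<longleftrightarrow> x = 0 \<or> x = y"
proof
  assume h: "x = sqrt x * sqrt y"
  have "x * x = (sqrt x * sqrt y) * (sqrt x * sqrt y)" using arg_cong2[OF h h, of "(*)"] .
  also have "\<dots> = (sqrt x * sqrt x) * (sqrt y * sqrt y)" by (simp only: mult_ac)
  also have "\<dots> = x * y" using assms by simp
  finally have "x * (x - y) = 0" by (simp add: algebra_simps)
  then show "x = 0 \<or> x = y" by auto
next
  assume "x = 0 \<or> x = y"
  then show "x = sqrt x * sqrt y" using assms by auto
qed

lemma qB_iff: "quasi_brownian_isometry V S \<longleftrightarrow> TI \<and> QL"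
proof (cases TI)
  case False
  then show ?thesis unfolding quasi_brownian_isometry_def using two_iso_iff by blast
next
  case T: True
  have RS: "\<And>f. f \<in> ell2 V \<Longrightarrow> Rt (S (Rt f)) = (\<lambda>x. of_real (aa x) * S (Rt f) x)"
    using Rt_apply S_ell2 Rt_ell2 by blast
  have "quasi_brownian_isometry V S \<longleftrightarrow> (\<forall>f\<in>ell2 V. DD (S f) = Rt (S (Rt f)))"
    unfolding quasi_brownian_isometry_def sqrt_eq[OF T] using two_iso_iff T DeltaS S_ell2 by auto
  also have "\<dots> \<longleftrightarrow> QL"
  proof
    assume A: "\<forall>f\<in>ell2 V. DD (S f) = Rt (S (Rt f))"
    show QL unfolding QL_def
    proof (intro allI impI)
      fix u v assume uv: "(u,v) \<in> E"
      have uV: "u \<in> V" and vV: "v \<in> V" using edgeD uv by auto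
      have "DD (S (ev u)) v = Rt (S (Rt (ev u))) v" using A ev_ell2[OF uV] by metis
      moreover have "Rt (S (Rt (ev u))) v = of_real (aa v) * S (Rt (ev u)) v"
        using RS[OF ev_ell2[OF uV]] by (rule fun_cong)
      moreover have "S (Rt (ev u)) v = Rt (ev u) u" by (rule S_child[OF uv])
      moreover have "Rt (ev u) u = of_real (aa u) * ev u u" using Rt_apply[OF ev_ell2[OF uV]] by (rule fun_cong)
      moreover have "DD (S (ev u)) v = (of_nat (deg E v) - 1) * ev u u"
        using vV by (simp add: DD_def S_child[OF uv])
      ultimately have "(of_nat (deg E v) - 1) * 1 = complex_of_real (aa v) * (complex_of_real (aa u) * 1)"
        by (simp add: ev_def)
      then have "complex_of_real (real (deg E v) - 1) = complex_of_real (aa v * aa u)" by simp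
      then have "real (deg E v) - 1 = sqrt (real (deg E v) - 1) * sqrt (real (deg E u) - 1)"
        unfolding aa_def using of_real_eq_iff by blast
      moreover have "real (deg E v) - 1 \<ge> 0" "real (deg E u) - 1 \<ge> 0" using TI_deg[OF T] uV vV by auto
      ultimately have "real (deg E v) - 1 = 0 \<or> real (deg E v) - 1 = real (deg E u) - 1"
        using sqrt_eq_real by blast
      then show "deg E v = 1 \<or> deg E v = deg E u" by auto
    qed
  next
    assume Q: QL
    show "\<forall>f\<in>ell2 V. DD (S f) = Rt (S (Rt f))"
    proof (intro ballI ext)
      fix f x assume f: "f \<in> ell2 V"
      show "DD (S f) x = Rt (S (Rt f)) x"
      proof (cases "x \<in> V \<and> (\<exists>p. (p,x) \<in> E)")
        case True
        then obtain p where px: "(p,x) \<in> E" and xV: "x \<in> V" by blast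
        have pV: "p \<in> V" using px edgeD by auto
        have "deg E x = 1 \<or> deg E x = deg E p" using Q px unfolding QL_def by blast
        then have "complex_of_real (real (deg E x) - 1) = complex_of_real (aa x * aa p)"
        proof
          assume "deg E x = 1" then show ?thesis unfolding aa_def by simp
        next
          assume "deg E x = deg E p" then show ?thesis using aa_sq[OF T xV] unfolding aa_def by simp
        qed
        then have "(of_nat (deg E x) - 1) * f p = complex_of_real (aa x) * (complex_of_real (aa p) * f p)" by simp
        moreover have "Rt (S (Rt f)) x = of_real (aa x) * S (Rt f) x" using RS[OF f] by (rule fun_cong)
        moreover have "S (Rt f) x = Rt f p" by (rule S_child[OF px])
        moreover have "Rt f p = of_real (aa p) * f p" using Rt_apply[OF f] by (rule fun_cong)
        moreover have "DD (S f) x = (of_nat (deg E x) - 1) * f p" using xV by (simp add: DD_def S_child[OF px])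
        ultimately show ?thesis by simp
      next
        case False
        have "Rt (S (Rt f)) x = of_real (aa x) * S (Rt f) x" using RS[OF f] by (rule fun_cong)
        moreover have "S (Rt f) x = 0" "S f x = 0" using False S_out S_nopar by blast+
        ultimately show ?thesis by (simp add: DD_def)
      qed
    qed
  qed
  finally show ?thesis using T by simp
qed

end

theorem mainTheorem18:
  fixes V :: "'a set" and E :: "('a \<times> 'a) set"
  assumes tree: "directed_tree V E"
    and bdd: "bounded_op V (adjacency_op V E)"
  shows "(two_isometry V (adjacency_op V E) \<and> kernel_condition V (adjacency_op V E)
            \<longleftrightarrow> iso_Zplus V E \<or> iso_Z V E)
    \<and> (rooted V E \<longrightarrow> (brownian_isometry V (adjacency_op V E) \<longleftrightarrow> iso_Zplus V E))
    \<and> (rooted V E \<longrightarrow> (quasi_brownian_isometry V (adjacency_op V E)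
            \<longleftrightarrow> iso_Zplus V E \<or> quasi_brownian_tree V E))
    \<and> (\<not> rooted V E \<longrightarrow>
          (quasi_brownian_isometry V (adjacency_op V E) \<longleftrightarrow> brownian_isometry V (adjacency_op V E))
        \<and> (brownian_isometry V (adjacency_op V E) \<longleftrightarrow> iso_Z V E \<or> quasi_brownian_tree V E))"
proof -
  have "adj V E" using tree bdd by (simp add: adj_def adj_axioms_def dtree_def)
  then interpret adj V E .
  have A1: "All1 \<longleftrightarrow> iso_Zplus V E \<or> iso_Z V E"
    using Zplus_imp Z_imp imp_Zplus imp_Z by blast
  have A1r: "rooted V E \<Longrightarrow> All1 \<longleftrightarrow> iso_Zplus V E"
    using Zplus_imp imp_Zplus by blast
  have A1n: "\<not> rooted V E \<Longrightarrow> All1 \<longleftrightarrow> iso_Z V E"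
    using Z_imp imp_Z by blast
  have B: "brownian_isometry V S \<longleftrightarrow> TI \<and> QL \<and> R1"
    using brown_iff TI_Sib_QL by blast
  have nR1: "\<not> rooted V E \<Longrightarrow> R1"
    unfolding R1_def rooted_def is_root_def by blast
  show ?thesis
  proof (intro conjI impI)
    show "two_isometry V S \<and> kernel_condition V S \<longleftrightarrow> iso_Zplus V E \<or> iso_Z V E"
      using ker_iff A1 by blast
  next
    assume r: "rooted V E"
    show "brownian_isometry V S \<longleftrightarrow> iso_Zplus V E" using B rooted_L2[OF r] A1r[OF r] by blast
  next
    assume r: "rooted V E"
    show "quasi_brownian_isometry V S \<longleftrightarrow> iso_Zplus V E \<or> quasi_brownian_tree V E"
      using qB_iff L3 A1r[OF r] by blast
  next
    assume r: "\<not> rooted V E"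
    show "quasi_brownian_isometry V S \<longleftrightarrow> brownian_isometry V S" using qB_iff B nR1[OF r] by blast
  next
    assume r: "\<not> rooted V E"
    show "brownian_isometry V S \<longleftrightarrow> iso_Z V E \<or> quasi_brownian_tree V E"
      using B nR1[OF r] L3 A1n[OF r] by blast
  qed
qed

end
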